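(* A commuting triple $(N_1,N_2,N_3)$ of bounded operators is a $\mathbb P$-unitary if and only if both $(N_1,N_2,N_3)$ and $(N_1^*,N_2^*,N_3^* )$ are $\mathbb P$-isometries.
   Context: With $b\Gamma=\{(z_1+z_2,z_1z_2):|z_1|=|z_2|=1\}$ and pentablock $\mathbb P=\{(a_{21},\operatorname{tr}A_0,\det A_0): A_0=[a_{ij}]\in M_2(\mathbb C),\ \|A_0\|<1\}$ with distinguished boundary $b\mathbb P=\{(a,s,p):(s,p)\in b\Gamma,\ |a|^2+\frac14|s|^2=1\}$, a $\mathbb P$-unitary is a commuting triple of normal operators with Taylor joint spectrum in $b\mathbb P$, and a $\mathbb P$-isometry on $\mathcal H$ is the restriction to $\mathcal H$ of a $\mathbb P$-unitary on some $\mathcal K\supseteq\mathcal H$ for which $\mathcal H$ is a joint invariant subspace. *)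

theory Defs
  imports Complex_Main
begin

text \<open>The inner product is
linear in the second and conjugate-linear in the first argument.\<close>

class complex_vector = real_vector +
  fixes scaleC :: "complex \<Rightarrow> 'a \<Rightarrow> 'a"
  assumes scaleC_add_right: "scaleC a (x + y) = scaleC a x + scaleC a y"
    and scaleC_add_left: "scaleC (a + b) x = scaleC a x + scaleC b x"
    and scaleC_scaleC: "scaleC a (scaleC b x) = scaleC (a * b) x"
    and scaleC_one: "scaleC 1 x = x"
    and scaleR_scaleC: "scaleR r x = scaleC (complex_of_real r) x"

class complex_inner = complex_vector + real_normed_vector +
  fixes cinner :: "'a \<Rightarrow> 'a \<Rightarrow> complex"
  assumes cinner_commute: "cinner x y = cnj (cinner y x)"
    and cinner_add_left: "cinner (x + y) z = cinner x z + cinner y z"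
    and cinner_scaleC_left: "cinner (scaleC r x) y = cnj r * cinner x y"
    and cinner_real: "Im (cinner x x) = 0"
    and cinner_ge_zero: "0 \<le> Re (cinner x x)"
    and cinner_eq_zero_iff: "cinner x x = 0 \<longleftrightarrow> x = 0"
    and norm_eq_sqrt_cinner: "norm x = sqrt (Re (cinner x x))"

class chilbert_space = complex_inner + complete_space

definition bounded_clinear :: "('a::complex_inner \<Rightarrow> 'b::complex_inner) \<Rightarrow> bool" where
  "bounded_clinear T \<longleftrightarrow> bounded_linear T \<and> (\<forall>c x. T (scaleC c x) = scaleC c (T x))"

definition cadjoint :: "('a::complex_inner \<Rightarrow> 'b::complex_inner) \<Rightarrow> ('b \<Rightarrow> 'a)" where
  "cadjoint T = (THE S. \<forall>x y. cinner (T x) y = cinner x (S y))"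

definition normal_op :: "('a::complex_inner \<Rightarrow> 'a) \<Rightarrow> bool" where
  "normal_op T \<longleftrightarrow> T \<circ> cadjoint T = cadjoint T \<circ> T"

definition commuting_triple :: "('a \<Rightarrow> 'a) \<Rightarrow> ('a \<Rightarrow> 'a) \<Rightarrow> ('a \<Rightarrow> 'a) \<Rightarrow> bool" where
  "commuting_triple A1 A2 A3 \<longleftrightarrow>
     A1 \<circ> A2 = A2 \<circ> A1 \<and> A1 \<circ> A3 = A3 \<circ> A1 \<and> A2 \<circ> A3 = A3 \<circ> A2"

text \<open>Exactness of the Koszul complex
  0 -> H -> H^3 -> H^3 -> H -> 0 of a commuting triple (A1,A2,A3):
  d1 x = (A1 x, A2 x, A3 x),
  d2 (x1,x2,x3) = (A1 x2 - A2 x1, A1 x3 - A3 x1, A2 x3 - A3 x2),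
  d3 (y12,y13,y23) = A1 y23 - A2 y13 + A3 y12.\<close>

definition koszul_exact :: "('a::complex_inner \<Rightarrow> 'a) \<Rightarrow> ('a \<Rightarrow> 'a) \<Rightarrow> ('a \<Rightarrow> 'a) \<Rightarrow> bool" where
  "koszul_exact A1 A2 A3 \<longleftrightarrow>
     (\<forall>x. A1 x = 0 \<and> A2 x = 0 \<and> A3 x = 0 \<longrightarrow> x = 0) \<and>
     (\<forall>x1 x2 x3. A1 x2 - A2 x1 = 0 \<and> A1 x3 - A3 x1 = 0 \<and> A2 x3 - A3 x2 = 0 \<longrightarrow>
        (\<exists>x. x1 = A1 x \<and> x2 = A2 x \<and> x3 = A3 x)) \<and>
     (\<forall>y12 y13 y23. A1 y23 - A2 y13 + A3 y12 = 0 \<longrightarrow>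
        (\<exists>x1 x2 x3. y12 = A1 x2 - A2 x1 \<and> y13 = A1 x3 - A3 x1 \<and> y23 = A2 x3 - A3 x2)) \<and>
     (\<forall>y. \<exists>y12 y13 y23. y = A1 y23 - A2 y13 + A3 y12)"

definition taylor_spectrum ::
  "('a::complex_inner \<Rightarrow> 'a) \<Rightarrow> ('a \<Rightarrow> 'a) \<Rightarrow> ('a \<Rightarrow> 'a) \<Rightarrow> (complex \<times> complex \<times> complex) set" where
  "taylor_spectrum A1 A2 A3 =
     {(z1, z2, z3). \<not> koszul_exact (\<lambda>x. A1 x - scaleC z1 x) (\<lambda>x. A2 x - scaleC z2 x)
                                    (\<lambda>x. A3 x - scaleC z3 x)}"

definition bGamma :: "(complex \<times> complex) set" where
  "bGamma = {(z1 + z2, z1 * z2) | z1 z2. cmod z1 = 1 \<and> cmod z2 = 1}"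

definition bP :: "(complex \<times> complex \<times> complex) set" where
  "bP = {(a, s, p). (s, p) \<in> bGamma \<and> cmod a ^ 2 + (1/4) * cmod s ^ 2 = 1}"

definition P_unitary :: "('a::chilbert_space \<Rightarrow> 'a) \<Rightarrow> ('a \<Rightarrow> 'a) \<Rightarrow> ('a \<Rightarrow> 'a) \<Rightarrow> bool" where
  "P_unitary N1 N2 N3 \<longleftrightarrow>
     bounded_clinear N1 \<and> bounded_clinear N2 \<and> bounded_clinear N3 \<and>
     commuting_triple N1 N2 N3 \<and> normal_op N1 \<and> normal_op N2 \<and> normal_op N3 \<and>
     taylor_spectrum N1 N2 N3 \<subseteq> bP"

text \<open>(T1,T2,T3) on H is a P-isometry witnessed by a Hilbert space K of type 'b:
  H is identified with its image under an isometric complex-linear embedding V,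
  which is jointly invariant under a P-unitary (U1,U2,U3) on K whose restriction
  is (T1,T2,T3).\<close>

definition P_isometry_in ::
  "'b::chilbert_space itself \<Rightarrow> ('a::chilbert_space \<Rightarrow> 'a) \<Rightarrow> ('a \<Rightarrow> 'a) \<Rightarrow> ('a \<Rightarrow> 'a) \<Rightarrow> bool" where
  "P_isometry_in _ T1 T2 T3 \<longleftrightarrow>
     (\<exists>(V::'a \<Rightarrow> 'b) U1 U2 U3.
        bounded_clinear V \<and> (\<forall>x y. cinner (V x) (V y) = cinner x y) \<and>
        P_unitary U1 U2 U3 \<and>
        (\<forall>x. U1 (V x) = V (T1 x)) \<and> (\<forall>x. U2 (V x) = V (T2 x)) \<and> (\<forall>x. U3 (V x) = V (T3 x)))"

end

theory Submission
  imports Defs "HOL-Analysis.Analysis"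
begin


context complex_vector begin
lemma scaleC_zero_right[simp]: "scaleC a 0 = 0"
proof -
  have "scaleC a 0 + scaleC a 0 = scaleC a 0 + 0" by (simp add: scaleC_add_right[symmetric])
  then show ?thesis by simp
qed
lemma scaleC_zero_left[simp]: "scaleC 0 x = 0"
proof -
  have "scaleC 0 x + scaleC 0 x = scaleC 0 x + 0" by (simp add: scaleC_add_left[symmetric])
  then show ?thesis by simp
qed
lemma scaleC_minus_left: "scaleC (- a) x = - scaleC a x"
proof -
  have "scaleC (- a) x + scaleC a x = scaleC (- a + a) x" by (rule scaleC_add_left[symmetric])
  also have "\<dots> = 0" by simp
  finally show ?thesis by (simp only: eq_neg_iff_add_eq_0)
qed
lemma scaleC_minus_right: "scaleC a (- x) = - scaleC a x"
proof -
  have "scaleC a (- x) + scaleC a x = scaleC a (- x + x)" by (rule scaleC_add_right[symmetric])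
  also have "\<dots> = 0" by simp
  finally show ?thesis by (simp only: eq_neg_iff_add_eq_0)
qed
lemma scaleC_diff_right: "scaleC a (x - y) = scaleC a x - scaleC a y"
  by (simp only: diff_conv_add_uminus scaleC_add_right scaleC_minus_right)
lemma scaleC_diff_left: "scaleC (a - b) x = scaleC a x - scaleC b x"
proof -
  have "a - b = a + - b" by simp
  then show ?thesis by (simp only: diff_conv_add_uminus scaleC_add_left scaleC_minus_left)
qed
end

declare [[show_types=false]]
lemma cinner_add_right: "cinner x (y + z) = cinner x y + cinner x z"
  by (subst (1 2 3) cinner_commute) (simp add: cinner_add_left)
lemma cinner_scaleC_right: "cinner x (scaleC r y) = r * cinner x y"
  by (subst (1 2) cinner_commute) (simp add: cinner_scaleC_left)
lemma cinner_zero_left[simp]: "cinner 0 x = 0"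
proof -
  have "cinner 0 x + cinner 0 x = cinner 0 x + 0" by (simp add: cinner_add_left[symmetric])
  then show ?thesis by simp
qed
lemma cinner_zero_right[simp]: "cinner x 0 = 0"
  by (subst cinner_commute) simp
lemma cinner_minus_left: "cinner (- x) y = - cinner x y"
proof -
  have "cinner (- x) y + cinner x y = cinner (- x + x) y" by (rule cinner_add_left[symmetric])
  also have "\<dots> = 0" by simp
  finally show ?thesis by (simp add: eq_neg_iff_add_eq_0)
qed
lemma cinner_minus_right: "cinner x (- y) = - cinner x y"
  by (subst (1 2) cinner_commute) (simp add: cinner_minus_left)
lemma cinner_diff_left: "cinner (x - y) z = cinner x z - cinner y z"
  by (simp only: diff_conv_add_uminus cinner_add_left cinner_minus_left)
lemma cinner_diff_right: "cinner x (y - z) = cinner x y - cinner x z"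
  by (simp only: diff_conv_add_uminus cinner_add_right cinner_minus_right)
lemma cinner_self: "cinner x x = complex_of_real ((norm x)\<^sup>2)"
proof -
  have "(norm x)\<^sup>2 = Re (cinner x x)" using norm_eq_sqrt_cinner[of x] cinner_ge_zero[of x] by simp
  then show ?thesis using cinner_real by (simp add: complex_eq_iff)
qed
lemma Re_cinner_self: "Re (cinner x x) = (norm x)\<^sup>2"
  by (simp add: cinner_self)
lemma cinner_eq_zero_all: "(\<And>y. cinner x y = 0) \<Longrightarrow> x = 0"
  using cinner_eq_zero_iff by blast
lemma cinner_eq_zero_all': "(\<And>y. cinner y x = 0) \<Longrightarrow> x = 0"
  using cinner_eq_zero_iff by blast
lemma cinner_ext: "(\<And>y. cinner x y = cinner z y) \<Longrightarrow> x = z"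
proof -
  assume "\<And>y. cinner x y = cinner z y"
  then have "\<And>y. cinner (x - z) y = 0" by (simp add: cinner_diff_left)
  then have "x - z = 0" by (rule cinner_eq_zero_all)
  then show "x = z" by simp
qed
lemma cinner_ext': "(\<And>y. cinner y x = cinner y z) \<Longrightarrow> x = z"
proof -
  assume "\<And>y. cinner y x = cinner y z"
  then have "\<And>y. cinner y (x - z) = 0" by (simp add: cinner_diff_right)
  then have "x - z = 0" by (rule cinner_eq_zero_all')
  then show "x = z" by simp
qed
lemma norm_diff_sq: "(norm (x - y))\<^sup>2 = (norm x)\<^sup>2 + (norm y)\<^sup>2 - 2 * Re (cinner x y)"
proof -
  have "cinner (x - y) (x - y) = cinner x x - cinner x y - cnj (cinner x y) + cinner y y"
    by (simp add: cinner_diff_left cinner_diff_right cinner_commute[of y x])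
  then have "Re (cinner (x - y) (x - y)) = Re (cinner x x) + Re (cinner y y) - 2 * Re (cinner x y)"
    by simp
  then show ?thesis by (simp add: Re_cinner_self)
qed
lemma norm_add_sq: "(norm (x + y))\<^sup>2 = (norm x)\<^sup>2 + (norm y)\<^sup>2 + 2 * Re (cinner x y)"
  using norm_diff_sq[of x "- y"] by (simp add: cinner_minus_right)
lemma norm_scaleC[simp]: "norm (scaleC c (x::'a::complex_inner)) = cmod c * norm x"
proof -
  have "cinner (scaleC c x) (scaleC c x) = (cnj c * c) * cinner x x"
    by (simp add: cinner_scaleC_left cinner_scaleC_right)
  also have "cnj c * c = complex_of_real ((cmod c)\<^sup>2)"
    using complex_norm_square[of c] by (simp add: mult.commute)
  finally have "Re (cinner (scaleC c x) (scaleC c x)) = (cmod c)\<^sup>2 * (norm x)\<^sup>2"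
    by (simp add: cinner_self)
  then have "(norm (scaleC c x))\<^sup>2 = (cmod c * norm x)\<^sup>2"
    by (simp add: Re_cinner_self power_mult_distrib)
  then show ?thesis by (simp add: power2_eq_iff_nonneg)
qed

lemma Cauchy_Schwarz: "cmod (cinner x y) \<le> norm x * norm (y::'a::complex_inner)"
proof (cases "y = 0")
  case True then show ?thesis by simp
next
  case False
  then have ny: "norm y > 0" by simp
  define c where "c = cinner y x / complex_of_real ((norm y)\<^sup>2)"
  have orth: "cinner y (x - scaleC c y) = 0"
    using ny by (simp add: cinner_diff_right cinner_scaleC_right c_def cinner_self)
  have orth': "cinner (x - scaleC c y) (scaleC c y) = 0"
    using orth by (subst cinner_commute) (simp add: cinner_scaleC_left)
  have "(norm x)\<^sup>2 = (norm ((x - scaleC c y) + scaleC c y))\<^sup>2" by simp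
  also have "\<dots> = (norm (x - scaleC c y))\<^sup>2 + (norm (scaleC c y))\<^sup>2"
    by (simp only: norm_add_sq orth') simp
  finally have "(norm (scaleC c y))\<^sup>2 \<le> (norm x)\<^sup>2" by simp
  then have "(cmod c * norm y)\<^sup>2 \<le> (norm x)\<^sup>2" by simp
  moreover have "cmod c * norm y = cmod (cinner x y) / norm y"
    using ny by (simp add: c_def norm_divide power2_eq_square cinner_commute[of y x] norm_mult)
  ultimately have "(cmod (cinner x y) / norm y)\<^sup>2 \<le> (norm x)\<^sup>2" by simp
  then have "cmod (cinner x y) / norm y \<le> norm x"
    by (rule power2_le_imp_le) simp
  then show ?thesis using ny by (simp add: divide_le_eq mult.commute)
qed





definition csubspace :: "'a::complex_vector set \<Rightarrow> bool" where
  "csubspace M \<longleftrightarrow> 0 \<in> M \<and> (\<forall>x\<in>M. \<forall>y\<in>M. x + y \<in> M) \<and> (\<forall>c. \<forall>x\<in>M. scaleC c x \<in> M)"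

lemma csubspace_diff: "csubspace M \<Longrightarrow> x \<in> M \<Longrightarrow> y \<in> M \<Longrightarrow> x - y \<in> M"
proof -
  assume M: "csubspace M" "x \<in> M" "y \<in> M"
  then have "scaleC (-1) y \<in> M" unfolding csubspace_def by blast
  then have "- y \<in> M" by (simp add: scaleC_minus_left scaleC_one)
  with M show ?thesis unfolding csubspace_def by (metis diff_conv_add_uminus)
qed

lemma scaleC_two: "scaleC 2 x = x + (x::'a::complex_vector)"
proof -
  have "scaleC (1 + 1) x = x + x" by (simp only: scaleC_add_left scaleC_one)
  then show ?thesis by simp
qed

lemma parallelogram:
  "(norm (a + b))\<^sup>2 + (norm (a - b))\<^sup>2 = 2 * (norm (a::'a::complex_inner))\<^sup>2 + 2 * (norm b)\<^sup>2"
  by (simp add: norm_add_sq norm_diff_sq)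

lemma projection_exists:
  fixes x :: "'a::chilbert_space"
  assumes cl: "closed M" and sub: "csubspace M"
  shows "\<exists>p\<in>M. \<forall>m\<in>M. cinner m (x - p) = 0"
proof -
  have M0: "0 \<in> M" and Madd: "\<And>a b. a \<in> M \<Longrightarrow> b \<in> M \<Longrightarrow> a + b \<in> M"
    and Msc: "\<And>c a. a \<in> M \<Longrightarrow> scaleC c a \<in> M"
    using sub unfolding csubspace_def by auto
  have Mne: "M \<noteq> {}" using M0 by auto
  define d where "d = infdist x M"
  have d0: "0 \<le> d" unfolding d_def by (rule infdist_nonneg)
  have dle: "\<And>m. m \<in> M \<Longrightarrow> d \<le> norm (x - m)"
    unfolding d_def using infdist_le by (metis dist_norm)
  have "\<forall>n. \<exists>m\<in>M. norm (x - m) < d + inverse (real (Suc n))"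
  proof
    fix n
    have "(INF a\<in>M. dist x a) < d + inverse (real (Suc n))"
      using Mne by (simp add: d_def infdist_notempty)
    then show "\<exists>m\<in>M. norm (x - m) < d + inverse (real (Suc n))"
      using cINF_less_iff[OF Mne bdd_below_image_dist] by (auto simp: dist_norm)
  qed
  then obtain m where mM: "\<And>n. m n \<in> M" and mless: "\<And>n. norm (x - m n) < d + inverse (real (Suc n))"
    by metis
  have key: "(norm (m j - m k))\<^sup>2 \<le> 4 * (2 * d + 1) * inverse (real (Suc N))"
    if "j \<ge> N" "k \<ge> N" for j k N
  proof -
    define \<delta> where "\<delta> = inverse (real (Suc N))"
    have \<delta>0: "0 < \<delta>" and \<delta>1: "\<delta> \<le> 1" unfolding \<delta>_def by (auto simp: inverse_le_1_iff)
    have ij: "inverse (real (Suc j)) \<le> \<delta>" "inverse (real (Suc k)) \<le> \<delta>"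
      unfolding \<delta>_def using that by (auto intro!: le_imp_inverse_le)
    have aj: "norm (x - m j) \<le> d + \<delta>" using mless[of j] ij by linarith
    have ak: "norm (x - m k) \<le> d + \<delta>" using mless[of k] ij by linarith
    have mid: "scaleC (1/2) (m j + m k) \<in> M" using mM Madd Msc by blast
    have "2 * d \<le> 2 * norm (x - scaleC (1/2) (m j + m k))" using dle[OF mid] by simp
    also have "2 * norm (x - scaleC (1/2) (m j + m k)) = norm ((x - m j) + (x - m k))"
    proof -
      have "(x - m j) + (x - m k) = scaleC 2 (x - scaleC (1/2) (m j + m k))"
        by (simp add: scaleC_diff_right scaleC_scaleC scaleC_add_right scaleC_one scaleC_two)
      then show ?thesis by simp
    qed
    finally have s: "2 * d \<le> norm ((x - m j) + (x - m k))" .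
    have "(norm (m j - m k))\<^sup>2 = (norm ((x - m k) - (x - m j)))\<^sup>2" by (simp add: algebra_simps)
    also have "\<dots> = (norm ((x - m j) - (x - m k)))\<^sup>2" by (simp add: norm_minus_commute)
    also have "\<dots> = 2 * (norm (x - m j))\<^sup>2 + 2 * (norm (x - m k))\<^sup>2 - (norm ((x - m j) + (x - m k)))\<^sup>2"
      using parallelogram[of "x - m j" "x - m k"] by linarith
    also have "\<dots> \<le> 2 * (d + \<delta>)\<^sup>2 + 2 * (d + \<delta>)\<^sup>2 - (2 * d)\<^sup>2"
    proof -
      have "(norm (x - m j))\<^sup>2 \<le> (d + \<delta>)\<^sup>2" using aj by (simp add: power_mono)
      moreover have "(norm (x - m k))\<^sup>2 \<le> (d + \<delta>)\<^sup>2" using ak by (simp add: power_mono)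
      moreover have "(2 * d)\<^sup>2 \<le> (norm ((x - m j) + (x - m k)))\<^sup>2" using power_mono[OF s, of 2] d0 by simp
      ultimately show ?thesis by linarith
    qed
    also have "\<dots> = 4 * (2 * d * \<delta> + \<delta> * \<delta>)" by (simp add: power2_eq_square algebra_simps)
    also have "\<dots> \<le> 4 * (2 * d + 1) * \<delta>"
      using \<delta>0 \<delta>1 d0 by (simp add: algebra_simps mult_left_le)
    finally show ?thesis unfolding \<delta>_def .
  qed
  have "Cauchy m"
  proof (rule metric_CauchyI)
    fix e :: real assume e: "0 < e"
    have "0 < e\<^sup>2 / (4 * (2 * d + 1))" using e d0 by simp
    then obtain N where N: "inverse (real (Suc N)) < e\<^sup>2 / (4 * (2 * d + 1))"
      using reals_Archimedean by blast
    show "\<exists>M. \<forall>j\<ge>M. \<forall>k\<ge>M. dist (m j) (m k) < e"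
    proof (intro exI allI impI)
      fix j k assume "j \<ge> N" "k \<ge> N"
      then have "(norm (m j - m k))\<^sup>2 \<le> 4 * (2 * d + 1) * inverse (real (Suc N))" by (rule key)
      also have "\<dots> < e\<^sup>2" using N d0 by (simp add: field_simps)
      finally have "(norm (m j - m k))\<^sup>2 < e\<^sup>2" .
      then show "dist (m j) (m k) < e" using e by (simp add: dist_norm power_less_imp_less_base)
    qed
  qed
  then obtain p where mp: "m \<longlonglongrightarrow> p" using convergent_eq_Cauchy by blast
  have pM: "p \<in> M" using closed_sequentially[OF cl] mM mp by blast
  have pd: "norm (x - p) \<le> d"
  proof (rule LIMSEQ_le_const)
    have i0: "(\<lambda>n. inverse (real (Suc n))) \<longlonglongrightarrow> 0" by (rule LIMSEQ_inverse_real_of_nat)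
    have "(\<lambda>n. m n - p) \<longlonglongrightarrow> 0" using mp by (simp add: LIM_zero)
    then have n0: "(\<lambda>n. norm (m n - p)) \<longlonglongrightarrow> 0" by (rule tendsto_norm_zero)
    have "(\<lambda>n. d + inverse (real (Suc n)) + norm (m n - p)) \<longlonglongrightarrow> d + 0 + 0"
      by (intro tendsto_add tendsto_const i0 n0)
    then show "(\<lambda>n. d + inverse (real (Suc n)) + norm (m n - p)) \<longlonglongrightarrow> d" by simp
    show "\<exists>N. \<forall>n\<ge>N. norm (x - p) \<le> d + inverse (real (Suc n)) + norm (m n - p)"
    proof (intro exI allI impI)
      fix n
      have "norm (x - p) \<le> norm (x - m n) + norm (m n - p)" using norm_triangle_ineq[of "x - m n" "m n - p"] by simp
      then show "norm (x - p) \<le> d + inverse (real (Suc n)) + norm (m n - p)" using mless[of n] by linarith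
    qed
  qed
  show ?thesis
  proof (intro bexI[OF _ pM] ballI)
    fix u assume uM: "u \<in> M"
    define e where "e = x - p"
    define w where "w = cinner u e"
    define t where "t = 1 / ((norm u)\<^sup>2 + 1)"
    have t0: "0 < t" unfolding t_def by (simp add: add_nonneg_pos)
    have "p + scaleC (complex_of_real t * w) u \<in> M" using pM uM Madd Msc by blast
    then have "d \<le> norm (x - (p + scaleC (complex_of_real t * w) u))" by (rule dle)
    then have "norm e \<le> norm (e - scaleC (complex_of_real t * w) u)" using pd unfolding e_def by (simp add: algebra_simps)
    then have "(norm e)\<^sup>2 \<le> (norm (e - scaleC (complex_of_real t * w) u))\<^sup>2" by (simp add: power_mono)
    also have "\<dots> = (norm e)\<^sup>2 + (t * cmod w)\<^sup>2 * (norm u)\<^sup>2 - 2 * Re (cinner e (scaleC (complex_of_real t * w) u))"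
      by (simp add: norm_diff_sq norm_mult power_mult_distrib abs_of_pos[OF t0])
    also have "cinner e (scaleC (complex_of_real t * w) u) = complex_of_real (t * (cmod w)\<^sup>2)"
    proof -
      have "cinner e u = cnj w" unfolding w_def by (subst cinner_commute) simp
      then have "cinner e (scaleC (complex_of_real t * w) u) = complex_of_real t * (w * cnj w)"
        by (simp add: cinner_scaleC_right)
      then show ?thesis using complex_norm_square[of w] by simp
    qed
    finally have "2 * (t * (cmod w)\<^sup>2) \<le> (t * cmod w)\<^sup>2 * (norm u)\<^sup>2" by simp
    then have "2 * (cmod w)\<^sup>2 \<le> t * (cmod w)\<^sup>2 * (norm u)\<^sup>2"
      using t0 by (simp add: power2_eq_square algebra_simps)
    moreover have tn: "t * (norm u)\<^sup>2 \<le> 1" unfolding t_def by (simp add: divide_le_eq_1 add_nonneg_pos)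
    have "t * (cmod w)\<^sup>2 * (norm u)\<^sup>2 \<le> (cmod w)\<^sup>2"
      using mult_left_mono[OF tn, of "(cmod w)\<^sup>2"] by (simp add: mult_ac)
    ultimately have "2 * (cmod w)\<^sup>2 \<le> (cmod w)\<^sup>2" by linarith
    then have "cmod w = 0" by simp
    then show "cinner u (x - p) = 0" unfolding w_def e_def by simp
  qed
qed




lemma riesz_subspace:
  fixes \<phi> :: "'a::chilbert_space \<Rightarrow> complex"
  assumes cl: "closed S" and sub: "csubspace S"
    and add: "\<And>x y. x \<in> S \<Longrightarrow> y \<in> S \<Longrightarrow> \<phi> (x + y) = \<phi> x + \<phi> y"
    and sc: "\<And>c x. x \<in> S \<Longrightarrow> \<phi> (scaleC c x) = c * \<phi> x"
    and bnd: "\<And>x. x \<in> S \<Longrightarrow> cmod (\<phi> x) \<le> B * norm x"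
  shows "\<exists>w\<in>S. \<forall>z\<in>S. \<phi> z = cinner w z"
proof (cases "\<forall>z\<in>S. \<phi> z = 0")
  case True
  have "0 \<in> S" using sub unfolding csubspace_def by auto
  with True show ?thesis by (intro bexI[of _ 0]) auto
next
  case False
  then obtain x0 where x0S: "x0 \<in> S" and fx0: "\<phi> x0 \<noteq> 0" by blast
  have S0: "0 \<in> S" and Sadd: "\<And>a b. a \<in> S \<Longrightarrow> b \<in> S \<Longrightarrow> a + b \<in> S"
    and Ssc: "\<And>c a. a \<in> S \<Longrightarrow> scaleC c a \<in> S"
    using sub unfolding csubspace_def by auto
  have phi0: "\<phi> 0 = 0" using sc[OF S0, of 0] by simp
  have diff: "\<phi> (a - b) = \<phi> a - \<phi> b" if "a \<in> S" "b \<in> S" for a b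
  proof -
    have ab: "a - b \<in> S" using csubspace_diff[OF sub that] .
    have "\<phi> a = \<phi> ((a - b) + b)" by simp
    also have "\<dots> = \<phi> (a - b) + \<phi> b" using add[OF ab that(2)] .
    finally show ?thesis by simp
  qed
  define K where "K = {z \<in> S. \<phi> z = 0}"
  have Kcl: "closed K"
    unfolding closed_sequential_limits
  proof (intro allI impI, elim conjE)
    fix zs z assume zK: "\<forall>n. zs n \<in> K" and lim: "zs \<longlonglongrightarrow> z"
    have zS: "z \<in> S" using closed_sequentially[OF cl] zK lim unfolding K_def by auto
    have "cmod (\<phi> z) \<le> 0"
    proof (rule LIMSEQ_le[OF tendsto_const])
      have "(\<lambda>n. zs n - z) \<longlonglongrightarrow> 0" using lim by (simp add: LIM_zero)
      then have "(\<lambda>n. norm (zs n - z)) \<longlonglongrightarrow> 0" by (rule tendsto_norm_zero)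
      then have "(\<lambda>n. B * norm (zs n - z)) \<longlonglongrightarrow> B * 0" by (intro tendsto_mult tendsto_const)
      then show "(\<lambda>n. B * norm (zs n - z)) \<longlonglongrightarrow> 0" by simp
      show "\<exists>N. \<forall>n\<ge>N. cmod (\<phi> z) \<le> B * norm (zs n - z)"
      proof (intro exI allI impI)
        fix n
        have znS: "zs n \<in> S" and fzn: "\<phi> (zs n) = 0" using zK unfolding K_def by auto
        have "cmod (\<phi> z) = cmod (\<phi> (zs n - z))" using diff[OF znS zS] fzn by simp
        also have "\<dots> \<le> B * norm (zs n - z)" using bnd csubspace_diff[OF sub znS zS] by blast
        finally show "cmod (\<phi> z) \<le> B * norm (zs n - z)" .
      qed
    qed
    then show "z \<in> K" using zS unfolding K_def by simp
  qed
  have Ksub: "csubspace K"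
    unfolding csubspace_def K_def using S0 Sadd Ssc phi0 add sc by auto
  obtain p where pK: "p \<in> K" and orth: "\<And>m. m \<in> K \<Longrightarrow> cinner m (x0 - p) = 0"
    using projection_exists[OF Kcl Ksub, of x0] by blast
  define z0 where "z0 = x0 - p"
  have pS: "p \<in> S" and fp: "\<phi> p = 0" using pK unfolding K_def by auto
  have z0S: "z0 \<in> S" unfolding z0_def using csubspace_diff[OF sub x0S pS] .
  have fz0: "\<phi> z0 = \<phi> x0" unfolding z0_def using diff[OF x0S pS] fp by simp
  have z0ne: "z0 \<noteq> 0" using fz0 fx0 phi0 by auto
  have n0: "norm z0 \<noteq> 0" using z0ne by simp
  define w where "w = scaleC (cnj (\<phi> z0) / complex_of_real ((norm z0)\<^sup>2)) z0"
  show ?thesis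
  proof (intro bexI[of _ w] ballI)
    show "w \<in> S" unfolding w_def using Ssc z0S by blast
    fix z assume zS: "z \<in> S"
    define v where "v = z - scaleC (\<phi> z / \<phi> z0) z0"
    have vS: "v \<in> S" unfolding v_def using csubspace_diff[OF sub zS Ssc[OF z0S]] .
    have "\<phi> v = \<phi> z - (\<phi> z / \<phi> z0) * \<phi> z0"
      unfolding v_def using diff[OF zS Ssc[OF z0S]] sc[OF z0S] by simp
    then have "\<phi> v = 0" using fz0 fx0 by simp
    then have "v \<in> K" using vS unfolding K_def by simp
    then have "cinner v z0 = 0" using orth unfolding z0_def by blast
    then have "cinner z0 v = 0" by (subst cinner_commute) simp
    then have "cinner z0 z = (\<phi> z / \<phi> z0) * cinner z0 z0"
      unfolding v_def by (simp add: cinner_diff_right cinner_scaleC_right)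
    then have "cinner z0 z = (\<phi> z / \<phi> z0) * complex_of_real ((norm z0)\<^sup>2)"
      by (simp add: cinner_self)
    then have "\<phi> z = \<phi> z0 * cinner z0 z / complex_of_real ((norm z0)\<^sup>2)"
      using n0 fz0 fx0 by (simp add: field_simps)
    then show "\<phi> z = cinner w z"
      unfolding w_def by (simp add: cinner_scaleC_left)
  qed
qed

lemma csubspace_UNIV: "csubspace UNIV" unfolding csubspace_def by simp

lemma bounded_clinear_add: "bounded_clinear T \<Longrightarrow> T (x + y) = T x + T y"
  unfolding bounded_clinear_def by (simp add: linear_simps)
lemma bounded_clinear_scaleC: "bounded_clinear T \<Longrightarrow> T (scaleC c x) = scaleC c (T x)"
  unfolding bounded_clinear_def by simp
lemma bounded_clinear_bounded: "bounded_clinear T \<Longrightarrow> \<exists>K>0. \<forall>x. norm (T x) \<le> norm x * K"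
  unfolding bounded_clinear_def using bounded_linear.pos_bounded by blast
lemma bounded_clinear_diff: "bounded_clinear T \<Longrightarrow> T (x - y) = T x - T y"
  unfolding bounded_clinear_def by (simp add: linear_simps)
lemma bounded_clinear_zero: "bounded_clinear T \<Longrightarrow> T 0 = 0"
  unfolding bounded_clinear_def by (simp add: linear_simps)
lemma bounded_clinear_minus: "bounded_clinear T \<Longrightarrow> T (- x) = - T x"
  unfolding bounded_clinear_def by (simp add: linear_simps)

lemma bounded_clinear_intro:
  assumes "\<And>x y. T (x + y) = T x + T y" "\<And>c x. T (scaleC c x) = scaleC c (T x)"
    "\<And>x. norm (T x) \<le> norm x * K"
  shows "bounded_clinear T"
  unfolding bounded_clinear_def
proof
  show "bounded_linear T"
    by (rule bounded_linear_intro[OF assms(1) _ assms(3)]) (simp add: scaleR_scaleC assms(2))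
qed (simp add: assms(2))

lemma adjoint_exists:
  fixes T :: "'a::chilbert_space \<Rightarrow> 'b::chilbert_space"
  assumes T: "bounded_clinear T"
  shows "\<exists>S. \<forall>x y. cinner (T x) y = cinner x (S y)"
proof -
  obtain K where K: "\<And>x. norm (T x) \<le> norm x * K" using bounded_clinear_bounded[OF T] by blast
  have "\<forall>y. \<exists>w. \<forall>x. cinner (T x) y = cinner x w"
  proof
    fix y :: 'b
    have "\<exists>w\<in>UNIV. \<forall>z\<in>UNIV. cinner y (T z) = cinner w z"
    proof (rule riesz_subspace[OF closed_UNIV csubspace_UNIV, where B = "norm y * K"])
      fix a b show "cinner y (T (a + b)) = cinner y (T a) + cinner y (T b)"
        by (simp add: bounded_clinear_add[OF T] cinner_add_right)
    next
      fix c a show "cinner y (T (scaleC c a)) = c * cinner y (T a)"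
        by (simp add: bounded_clinear_scaleC[OF T] cinner_scaleC_right)
    next
      fix a
      have "cmod (cinner y (T a)) \<le> norm y * norm (T a)" by (rule Cauchy_Schwarz)
      also have "\<dots> \<le> norm y * (norm a * K)" by (rule mult_left_mono[OF K]) simp
      finally show "cmod (cinner y (T a)) \<le> norm y * K * norm a" by (simp add: mult_ac)
    qed
    then obtain w where w: "\<And>z. cinner y (T z) = cinner w z" by blast
    show "\<exists>w. \<forall>x. cinner (T x) y = cinner x w"
    proof (intro exI allI)
      fix x show "cinner (T x) y = cinner x w"
        by (subst (1 2) cinner_commute) (simp add: w)
    qed
  qed
  then show ?thesis by metis
qed

lemma cadjoint_eq:
  assumes "\<And>x y. cinner (T x) y = cinner x (S y)"
  shows "cadjoint T = S"
  unfolding cadjoint_def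
proof (rule the_equality)
  show "\<forall>x y. cinner (T x) y = cinner x (S y)" using assms by blast
  fix S' assume S': "\<forall>x y. cinner (T x) y = cinner x (S' y)"
  show "S' = S"
  proof
    fix y show "S' y = S y"
      by (rule cinner_ext') (metis S' assms)
  qed
qed

lemma cadjoint_prop:
  fixes T :: "'a::chilbert_space \<Rightarrow> 'b::chilbert_space"
  assumes "bounded_clinear T"
  shows "cinner (T x) y = cinner x (cadjoint T y)"
proof -
  obtain S where S: "\<And>x y. cinner (T x) y = cinner x (S y)" using adjoint_exists[OF assms] by blast
  show ?thesis using S cadjoint_eq[of T S] S by simp
qed

lemma cadjoint_prop':
  fixes T :: "'a::chilbert_space \<Rightarrow> 'b::chilbert_space"
  assumes "bounded_clinear T"
  shows "cinner (cadjoint T y) x = cinner y (T x)"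
  by (subst (1 2) cinner_commute) (simp add: cadjoint_prop[OF assms])

lemma cadjoint_bounded_clinear:
  fixes T :: "'a::chilbert_space \<Rightarrow> 'b::chilbert_space"
  assumes T: "bounded_clinear T"
  shows "bounded_clinear (cadjoint T)"
proof -
  obtain K where K0: "K > 0" and K: "\<And>x. norm (T x) \<le> norm x * K" using bounded_clinear_bounded[OF T] by blast
  let ?S = "cadjoint T"
  show ?thesis
  proof (rule bounded_clinear_intro[where K = K])
    fix y z show "?S (y + z) = ?S y + ?S z"
      by (rule cinner_ext') (simp add: cadjoint_prop[OF T, symmetric] cinner_add_right)
  next
    fix c y show "?S (scaleC c y) = scaleC c (?S y)"
      by (rule cinner_ext') (simp add: cadjoint_prop[OF T, symmetric] cinner_scaleC_right)
  next
    fix y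
    have "(norm (?S y))\<^sup>2 = Re (cinner (?S y) (?S y))" by (simp add: Re_cinner_self)
    also have "\<dots> = Re (cinner (T (?S y)) y)" by (simp add: cadjoint_prop[OF T])
    also have "\<dots> \<le> cmod (cinner (T (?S y)) y)" by (rule complex_Re_le_cmod)
    also have "\<dots> \<le> norm (T (?S y)) * norm y" by (rule Cauchy_Schwarz)
    also have "\<dots> \<le> norm (?S y) * K * norm y" by (rule mult_right_mono[OF K]) simp
    finally have "(norm (?S y))\<^sup>2 \<le> norm (?S y) * (norm y * K)" by (simp add: mult_ac)
    then show "norm (?S y) \<le> norm y * K" using K0
      by (cases "norm (?S y) = 0") (auto simp: power2_eq_square)
  qed
qed

lemma cadjoint_cadjoint:
  fixes T :: "'a::chilbert_space \<Rightarrow> 'b::chilbert_space"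
  assumes T: "bounded_clinear T"
  shows "cadjoint (cadjoint T) = T"
  by (rule cadjoint_eq) (simp add: cadjoint_prop'[OF T])




lemma om_step1:
  fixes f :: "'a::banach \<Rightarrow> 'b::banach"
  assumes lin: "bounded_linear f" and cl: "closed (range f)"
  shows "\<exists>n::nat. \<exists>y0 r. r > 0 \<and> y0 \<in> range f \<and> (\<forall>y\<in>range f. dist y y0 < r \<longrightarrow> y \<in> closure (f ` cball 0 (real n)))"
proof -
  define R where "R = range f"
  define X where "X = top_of_set R"
  define F where "F n = R \<inter> closure (f ` cball 0 (real n))" for n
  have "closedin euclidean R" unfolding R_def by (rule closed_closedin[THEN iffD1, OF cl])
  then have cm: "completely_metrizable_space X"
    unfolding X_def by (rule completely_metrizable_space_closedin[OF completely_metrizable_space_euclidean])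
  have top: "topspace X = R" unfolding X_def by simp
  have "\<exists>n. X interior_of F n \<noteq> {}"
  proof (rule ccontr)
    assume "\<not> (\<exists>n. X interior_of F n \<noteq> {})"
    then have emp: "\<And>n. X interior_of F n = {}" by blast
    have "X interior_of \<Union>(range F) = {}"
    proof (rule Baire_category_alt)
      show "completely_metrizable_space X \<or> locally_compact_space X \<and> regular_space X" using cm by (rule disjI1)
      show "countable (range F)" by (rule countable_image) simp
      fix T assume "T \<in> range F"
      then obtain n where Tn: "T = F n" by (rule rangeE)
      have "closedin X (F n)" unfolding X_def F_def by (rule closedin_closed_Int) (rule closed_closure)
      then show "closedin X T \<and> X interior_of T = {}" using emp[of n] Tn by (rule_tac conjI) simp_all
    qed
    moreover have "\<Union>(range F) = R"
    proof
      show "\<Union>(range F) \<subseteq> R" unfolding F_def by (rule UN_least) (rule Int_lower1)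
      show "R \<subseteq> \<Union>(range F)"
      proof
        fix y assume "y \<in> R"
        then obtain x where y: "y = f x" unfolding R_def by (rule rangeE)
        obtain n :: nat where n: "norm x \<le> real n" using real_arch_simple by blast
        have "x \<in> cball 0 (real n)" using n by simp
        then have "y \<in> f ` cball 0 (real n)" using y by (rule rev_image_eqI)
        then have "y \<in> closure (f ` cball 0 (real n))" by (rule subsetD[OF closure_subset])
        then have "y \<in> F n" using \<open>y \<in> R\<close> unfolding F_def by (rule_tac IntI)
        then show "y \<in> \<Union>(range F)" by (rule UN_I[OF UNIV_I])
      qed
    qed
    moreover have "0 \<in> R"
    proof -
      have "f 0 = 0" by (rule linear_0[OF bounded_linear.linear[OF lin]])
      then show ?thesis unfolding R_def by (metis rangeI)
    qed
    ultimately show False using interior_of_topspace[of X] unfolding top by simp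
  qed
  then obtain n y0 where "y0 \<in> X interior_of F n" by blast
  then obtain U where U: "openin X U" "y0 \<in> U" "U \<subseteq> F n" unfolding interior_of_def by blast
  then obtain T where T: "open T" "U = R \<inter> T" using openin_open[of R U] unfolding X_def by auto
  then obtain r where r: "r > 0" "ball y0 r \<subseteq> T" using U(2) T open_contains_ball[of T] by auto
  show ?thesis
  proof (intro exI conjI ballI impI)
    show "r > 0" by (rule r(1))
    have "y0 \<in> R" using U(2) T(2) by blast
    then show "y0 \<in> range f" unfolding R_def .
    fix y assume yR: "y \<in> range f" and yd: "dist y y0 < r"
    have "y \<in> ball y0 r" using yd by (simp add: dist_commute)
    then have "y \<in> T" using r(2) by blast
    then have "y \<in> U" using yR T(2) unfolding R_def by blast
    then show "y \<in> closure (f ` cball 0 (real n))" using U(3) unfolding F_def by blast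
  qed
qed


lemma om_step2:
  fixes f :: "'a::banach \<Rightarrow> 'b::banach"
  assumes lin: "bounded_linear f" and cl: "closed (range f)"
  shows "\<exists>K>0. \<forall>y\<in>range f. \<forall>e>0. \<exists>x. norm x \<le> K * norm y \<and> norm (f x - y) < e"
proof -
  interpret f: bounded_linear f by (rule lin)
  from om_step1[OF lin cl] obtain n :: nat and y0 r where
    nyr: "r > 0 \<and> y0 \<in> range f \<and> (\<forall>y\<in>range f. dist y y0 < r \<longrightarrow> y \<in> closure (f ` cball 0 (real n)))"
    by blast
  have r: "r > 0" and y0R: "y0 \<in> range f" using nyr by simp_all
  have B: "\<And>y. y \<in> range f \<Longrightarrow> dist y y0 < r \<Longrightarrow> y \<in> closure (f ` cball 0 (real n))"
    using nyr by blast
  have approx: "\<exists>x. norm x \<le> real n \<and> dist (f x) z < e"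
    if zc: "z \<in> closure (f ` cball 0 (real n))" and e0: "e > 0" for z e
  proof -
    have "\<forall>\<epsilon>>0. \<exists>y\<in>f ` cball 0 (real n). dist y z < \<epsilon>"
      using zc by (simp only: closure_approachable)
    then obtain u where u: "u \<in> f ` cball 0 (real n)" "dist u z < e" using e0 by blast
    then obtain x where "x \<in> cball 0 (real n)" "u = f x" by blast
    then show ?thesis using u by (intro exI[of _ x]) simp
  qed
  have small: "\<exists>x. norm x \<le> 2 * real n \<and> norm (f x - y) < e"
    if yR: "y \<in> range f" and ny: "norm y < r" and e: "e > 0" for y e
  proof -
    obtain a where a: "y = f a" using yR by blast
    obtain b where b: "y0 = f b" using y0R by blast
    have s1: "y0 + y \<in> range f" by (rule range_eqI[of _ f "b + a"]) (simp add: a b f.add)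
    have "dist (y0 + y) y0 = norm y" by (simp add: dist_norm)
    then have c1: "y0 + y \<in> closure (f ` cball 0 (real n))" using B[OF s1] ny by simp
    have c2: "y0 \<in> closure (f ` cball 0 (real n))" using B[OF y0R] r by simp
    obtain x1 where x1: "norm x1 \<le> real n" "dist (f x1) (y0 + y) < e / 2" using approx[OF c1 half_gt_zero[OF e]] by blast
    obtain x2 where x2: "norm x2 \<le> real n" "dist (f x2) y0 < e / 2" using approx[OF c2 half_gt_zero[OF e]] by blast
    have "norm (x1 - x2) \<le> norm x1 + norm x2" by (rule norm_triangle_ineq4)
    then have nx: "norm (x1 - x2) \<le> 2 * real n" using x1(1) x2(1) by linarith
    have "f (x1 - x2) - y = (f x1 - (y0 + y)) - (f x2 - y0)" by (simp add: f.diff algebra_simps)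
    then have "norm (f (x1 - x2) - y) \<le> norm (f x1 - (y0 + y)) + norm (f x2 - y0)"
      by (simp only: norm_triangle_ineq4)
    also have "\<dots> < e" using x1(2) x2(2) by (simp add: dist_norm)
    finally show ?thesis using nx by blast
  qed
  define K where "K = 4 * real n / r + 1"
  have K0: "K > 0" unfolding K_def using r by (simp add: add_nonneg_pos)
  show ?thesis
  proof (intro exI[of _ K] conjI K0 ballI allI impI)
    fix y e assume yR: "y \<in> range f" and e: "(e::real) > 0"
    show "\<exists>x. norm x \<le> K * norm y \<and> norm (f x - y) < e"
    proof (cases "y = 0")
      case True
      then show ?thesis using e by (intro exI[of _ 0]) simp
    next
      case False
      then have ny: "norm y > 0" by simp
      define c where "c = r / (2 * norm y)"
      have c0: "c > 0" unfolding c_def using r ny by simp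
      obtain a where a: "y = f a" using yR by blast
      have y'R: "c *\<^sub>R y \<in> range f" by (rule range_eqI[of _ f "c *\<^sub>R a"]) (simp add: a f.scaleR)
      have "norm (c *\<^sub>R y) = r / 2" unfolding c_def using ny r by simp
      then have "norm (c *\<^sub>R y) < r" using r by simp
      then obtain x' where x': "norm x' \<le> 2 * real n" "norm (f x' - c *\<^sub>R y) < e * c"
        using small[OF y'R _ mult_pos_pos[OF e c0]] by blast
      define x where "x = (1 / c) *\<^sub>R x'"
      have "f x - y = (1 / c) *\<^sub>R (f x' - c *\<^sub>R y)"
        unfolding x_def using c0 by (simp add: f.scaleR scaleR_diff_right)
      then have "norm (f x - y) = norm (f x' - c *\<^sub>R y) / c" using c0 by simp
      also have "\<dots> < e" using x'(2) c0 by (simp add: divide_less_eq)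
      finally have 1: "norm (f x - y) < e" .
      have "norm x = norm x' / c" unfolding x_def using c0 by simp
      also have "\<dots> \<le> 2 * real n / c" using x'(1) c0 by (simp add: divide_right_mono)
      also have "\<dots> = 4 * real n / r * norm y" unfolding c_def using r ny by (simp add: field_simps)
      also have "\<dots> \<le> K * norm y" unfolding K_def using ny by (intro mult_right_mono) simp_all
      finally have 2: "norm x \<le> K * norm y" .
      show ?thesis using 1 2 by blast
    qed
  qed
qed


lemma open_mapping_closed_range:
  fixes f :: "'a::banach \<Rightarrow> 'b::banach"
  assumes lin: "bounded_linear f" and cl: "closed (range f)"
  shows "\<exists>C>0. \<forall>y\<in>range f. \<exists>x. f x = y \<and> norm x \<le> C * norm y"
proof -
  interpret f: bounded_linear f by (rule lin)
  from om_step2[OF lin cl] obtain K where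
    KA: "K > 0 \<and> (\<forall>y\<in>range f. \<forall>e>0. \<exists>x. norm x \<le> K * norm y \<and> norm (f x - y) < e)"
    by blast
  have K0: "K > 0" using KA by simp
  have A: "\<And>y e. y \<in> range f \<Longrightarrow> e > 0 \<Longrightarrow> \<exists>x. norm x \<le> K * norm y \<and> norm (f x - y) < e"
    using KA by blast
  have "\<forall>y\<in>range f. \<exists>x. norm x \<le> K * norm y \<and> norm (f x - y) \<le> norm y / 2"
  proof
    fix y assume yR: "y \<in> range f"
    show "\<exists>x. norm x \<le> K * norm y \<and> norm (f x - y) \<le> norm y / 2"
    proof (cases "y = 0")
      case True then show ?thesis by (intro exI[of _ 0]) simp
    next
      case False
      then have "norm y / 2 > 0" by simp
      from A[OF yR this] obtain x where "norm x \<le> K * norm y" "norm (f x - y) < norm y / 2" by blast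
      then show ?thesis by (intro exI[of _ x]) simp
    qed
  qed
  then obtain g where g: "\<forall>y\<in>range f. norm (g y) \<le> K * norm y \<and> norm (f (g y) - y) \<le> norm y / 2"
    by (rule bchoice[THEN exE])
  have g1: "\<And>y. y \<in> range f \<Longrightarrow> norm (g y) \<le> K * norm y" using g by blast
  have g2: "\<And>y. y \<in> range f \<Longrightarrow> norm (f (g y) - y) \<le> norm y / 2" using g by blast
  show ?thesis
  proof (intro exI[of _ "2 * K"] conjI ballI)
    show "2 * K > 0" using K0 by simp
    fix y assume yR: "y \<in> range f"
    define rs where "rs = rec_nat y (\<lambda>_ r. r - f (g r))"
    have rs0: "rs 0 = y" unfolding rs_def by simp
    have rsS: "rs (Suc k) = rs k - f (g (rs k))" for k unfolding rs_def by simp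
    have rsR: "rs k \<in> range f" for k
    proof (induction k)
      case 0 then show ?case using yR rs0 by simp
    next
      case (Suc k)
      then obtain a where a: "rs k = f a" by blast
      have "rs (Suc k) = f (a - g (rs k))" by (simp add: rsS a f.diff)
      then show ?case by (rule range_eqI)
    qed
    have rsn: "norm (rs k) \<le> norm y * (1/2) ^ k" for k
    proof (induction k)
      case 0 then show ?case by (simp add: rs0)
    next
      case (Suc k)
      have "norm (rs (Suc k)) = norm (f (g (rs k)) - rs k)" by (simp add: rsS norm_minus_commute)
      also have "\<dots> \<le> norm (rs k) / 2" by (rule g2[OF rsR])
      also have "\<dots> \<le> norm y * (1/2) ^ k / 2" using Suc.IH by simp
      finally show ?case by simp
    qed
    define xs where "xs k = g (rs k)" for k
    have xsn: "norm (xs k) \<le> K * norm y * (1/2) ^ k" for k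
    proof -
      have "norm (xs k) \<le> K * norm (rs k)" unfolding xs_def by (rule g1[OF rsR])
      also have "\<dots> \<le> K * (norm y * (1/2) ^ k)" using rsn[of k] K0 by (intro mult_left_mono) simp_all
      finally show ?thesis by (simp add: mult.assoc)
    qed
    have geo: "summable (\<lambda>k. K * norm y * (1/2::real) ^ k)"
      by (intro summable_mult summable_geometric) simp
    have sn: "summable (\<lambda>k. norm (xs k))"
      by (rule summable_comparison_test'[OF geo, of 0]) (simp add: xsn)
    have sx: "summable xs" by (rule summable_norm_cancel[OF sn])
    have rs_lim: "rs \<longlonglongrightarrow> 0"
    proof (rule Lim_null_comparison)
      show "\<forall>\<^sub>F k in sequentially. norm (rs k) \<le> norm y * (1/2) ^ k" using rsn by simp
      have "(\<lambda>k. (1/2::real) ^ k) \<longlonglongrightarrow> 0" by (rule LIMSEQ_power_zero) simp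
      then have "(\<lambda>k. norm y * (1/2::real) ^ k) \<longlonglongrightarrow> norm y * 0" by (intro tendsto_mult tendsto_const)
      then show "(\<lambda>k. norm y * (1/2::real) ^ k) \<longlonglongrightarrow> 0" by simp
    qed
    have fxs: "f (xs k) = rs k - rs (Suc k)" for k unfolding xs_def by (simp add: rsS)
    have "(\<lambda>k. rs k - rs (Suc k)) sums (rs 0 - 0)" by (rule telescope_sums'[OF rs_lim])
    then have "(\<lambda>k. f (xs k)) sums y" by (simp add: fxs rs0)
    then have "f (suminf xs) = y" using f.suminf[OF sx] by (simp add: sums_iff)
    moreover have "norm (suminf xs) \<le> 2 * K * norm y"
    proof -
      have "norm (suminf xs) \<le> (\<Sum>k. norm (xs k))" by (rule summable_norm[OF sn])
      also have "\<dots> \<le> (\<Sum>k. K * norm y * (1/2::real) ^ k)" by (rule suminf_le[OF xsn sn geo])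
      also have "\<dots> = K * norm y * (\<Sum>k. (1/2::real) ^ k)" by (rule suminf_mult) (rule summable_geometric, simp)
      also have "(\<Sum>k. (1/2::real) ^ k) = 2" using suminf_geometric[of "1/2::real"] by simp
      finally show ?thesis by simp
    qed
    ultimately show "\<exists>x. f x = y \<and> norm x \<le> 2 * K * norm y" by blast
  qed
qed




instance chilbert_space \<subseteq> banach ..

lemma core:
  fixes g :: "'y::chilbert_space \<Rightarrow> 'z::chilbert_space" and h :: "'z \<Rightarrow> 'y"
  assumes g: "bounded_clinear g" and adj: "\<And>y z. cinner (g y) z = cinner y (h z)"
    and cl: "closed (range g)" and v: "\<And>y. g y = 0 \<Longrightarrow> cinner v y = 0"
  shows "\<exists>w. h w = v"
proof -
  have gl: "bounded_linear g" using g unfolding bounded_clinear_def by simp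
  from open_mapping_closed_range[OF gl cl] obtain C where
    CC: "C > 0 \<and> (\<forall>z\<in>range g. \<exists>y. g y = z \<and> norm y \<le> C * norm z)" by blast
  then have "\<forall>z\<in>range g. \<exists>y. g y = z \<and> norm y \<le> C * norm z" by simp
  then obtain pre where pre: "\<forall>z\<in>range g. g (pre z) = z \<and> norm (pre z) \<le> C * norm z"
    by (rule bchoice[THEN exE])
  have pre1: "\<And>z. z \<in> range g \<Longrightarrow> g (pre z) = z" using pre by blast
  have pre2: "\<And>z. z \<in> range g \<Longrightarrow> norm (pre z) \<le> C * norm z" using pre by blast
  have same: "cinner v a = cinner v b" if "g a = g b" for a b
  proof -
    have "g (a - b) = 0" using that by (simp add: bounded_clinear_diff[OF g])
    then have "cinner v (a - b) = 0" by (rule v)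
    then show ?thesis by (simp add: cinner_diff_right)
  qed
  define \<phi> where "\<phi> z = cinner v (pre z)" for z
  have phig: "\<phi> (g y) = cinner v y" for y
    unfolding \<phi>_def by (rule same) (simp add: pre1)
  have sub: "csubspace (range g)"
    unfolding csubspace_def
  proof (intro conjI ballI allI)
    show "0 \<in> range g" by (rule range_eqI[of _ g 0]) (simp add: bounded_clinear_zero[OF g])
    fix a b assume "a \<in> range g" "b \<in> range g"
    then obtain x y where "a = g x" "b = g y" by blast
    then show "a + b \<in> range g" by (intro range_eqI[of _ g "x + y"]) (simp add: bounded_clinear_add[OF g])
  next
    fix c a assume "a \<in> range g"
    then obtain x where "a = g x" by blast
    then show "scaleC c a \<in> range g" by (intro range_eqI[of _ g "scaleC c x"]) (simp add: bounded_clinear_scaleC[OF g])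
  qed
  have "\<exists>w\<in>range g. \<forall>z\<in>range g. \<phi> z = cinner w z"
  proof (rule riesz_subspace[OF cl sub, where B = "norm v * C"])
    fix a b assume "a \<in> range g" "b \<in> range g"
    then obtain x y where xy: "a = g x" "b = g y" by blast
    have "a + b = g (x + y)" by (simp add: xy bounded_clinear_add[OF g])
    then show "\<phi> (a + b) = \<phi> a + \<phi> b" by (simp add: xy phig cinner_add_right)
  next
    fix c a assume "a \<in> range g"
    then obtain x where x: "a = g x" by blast
    have "scaleC c a = g (scaleC c x)" by (simp add: x bounded_clinear_scaleC[OF g])
    then show "\<phi> (scaleC c a) = c * \<phi> a" by (simp add: x phig cinner_scaleC_right)
  next
    fix a assume aR: "a \<in> range g"
    have "cmod (\<phi> a) \<le> norm v * norm (pre a)" unfolding \<phi>_def by (rule Cauchy_Schwarz)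
    also have "\<dots> \<le> norm v * (C * norm a)" by (rule mult_left_mono[OF pre2[OF aR]]) simp
    finally show "cmod (\<phi> a) \<le> norm v * C * norm a" by (simp add: mult.assoc)
  qed
  then obtain w where w: "\<And>z. z \<in> range g \<Longrightarrow> \<phi> z = cinner w z" by blast
  have "h w = v"
  proof (rule cinner_ext)
    fix y
    have "cinner v y = \<phi> (g y)" by (simp add: phig)
    also have "\<dots> = cinner w (g y)" by (rule w) simp
    also have "\<dots> = cnj (cinner y (h w))" by (subst cinner_commute) (simp add: adj)
    also have "\<dots> = cinner (h w) y" by (subst cinner_commute) simp
    finally show "cinner (h w) y = cinner v y" by simp
  qed
  then show ?thesis by blast
qed


instantiation prod :: (complex_vector, complex_vector) complex_vector
begin
definition scaleC_prod_def: "scaleC c x = (scaleC c (fst x), scaleC c (snd x))"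
instance
proof
  fix a b :: complex and x y :: "'a \<times> 'b" and r :: real
  show "scaleC a (x + y) = scaleC a x + scaleC a y"
    by (simp add: scaleC_prod_def scaleC_add_right)
  show "scaleC (a + b) x = scaleC a x + scaleC b x"
    by (simp add: scaleC_prod_def scaleC_add_left)
  show "scaleC a (scaleC b x) = scaleC (a * b) x"
    by (simp add: scaleC_prod_def scaleC_scaleC)
  show "scaleC 1 x = x"
    by (simp add: scaleC_prod_def scaleC_one)
  show "r *\<^sub>R x = scaleC (complex_of_real r) x"
    by (simp add: scaleC_prod_def scaleR_prod_def scaleR_scaleC)
qed
end

lemma scaleC_Pair[simp]: "scaleC c (a, b) = (scaleC c a, scaleC c b)"
  by (simp add: scaleC_prod_def)

instantiation prod :: (complex_inner, complex_inner) complex_inner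
begin
definition cinner_prod_def: "cinner x y = cinner (fst x) (fst y) + cinner (snd x) (snd y)"
instance
proof
  fix x y z :: "'a \<times> 'b" and r :: complex
  show "cinner x y = cnj (cinner y x)"
    by (simp add: cinner_prod_def cinner_commute[of "fst x"] cinner_commute[of "snd x"])
  show "cinner (x + y) z = cinner x z + cinner y z"
    by (simp add: cinner_prod_def cinner_add_left)
  show "cinner (scaleC r x) y = cnj r * cinner x y"
    by (simp add: cinner_prod_def scaleC_prod_def cinner_scaleC_left algebra_simps)
  show "Im (cinner x x) = 0"
    by (simp add: cinner_prod_def cinner_self)
  show "0 \<le> Re (cinner x x)"
    by (simp add: cinner_prod_def cinner_self)
  show "cinner x x = 0 \<longleftrightarrow> x = 0"
  proof
    assume "cinner x x = 0"
    then have "Re (cinner x x) = 0" by simp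
    then have "(norm (fst x))\<^sup>2 + (norm (snd x))\<^sup>2 = 0" by (simp add: cinner_prod_def cinner_self)
    then have "norm (fst x) = 0" "norm (snd x) = 0" by (simp_all add: add_nonneg_eq_0_iff)
    then show "x = 0" by (simp add: prod_eq_iff)
  qed (simp add: cinner_prod_def)
  show "norm x = sqrt (Re (cinner x x))"
    by (simp add: cinner_prod_def cinner_self norm_prod_def)
qed
end

lemma cinner_Pair[simp]: "cinner (a, b) (c, d) = cinner a c + cinner b d"
  by (simp add: cinner_prod_def)

instance prod :: (chilbert_space, chilbert_space) chilbert_space ..


lemma kernel_closed:
  assumes "bounded_linear f" shows "closed {x. f x = 0}"
  by (rule closed_Collect_eq) (simp_all add: linear_continuous_on[OF assms])

lemma koszul_dual:
  fixes A1 A2 A3 :: "'a::chilbert_space \<Rightarrow> 'a"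
  assumes b1: "bounded_clinear A1" and b2: "bounded_clinear A2" and b3: "bounded_clinear A3"
    and c: "commuting_triple A1 A2 A3" and ex: "koszul_exact A1 A2 A3"
  shows "koszul_exact (cadjoint A1) (cadjoint A2) (cadjoint A3)"
proof -
  define B1 where "B1 = cadjoint A1"
  define B2 where "B2 = cadjoint A2"
  define B3 where "B3 = cadjoint A3"
  have p1: "\<And>x y. cinner (A1 x) y = cinner x (B1 y)" unfolding B1_def by (rule cadjoint_prop[OF b1])
  have p2: "\<And>x y. cinner (A2 x) y = cinner x (B2 y)" unfolding B2_def by (rule cadjoint_prop[OF b2])
  have p3: "\<And>x y. cinner (A3 x) y = cinner x (B3 y)" unfolding B3_def by (rule cadjoint_prop[OF b3])
  have bB1: "bounded_clinear B1" unfolding B1_def by (rule cadjoint_bounded_clinear[OF b1])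
  have bB2: "bounded_clinear B2" unfolding B2_def by (rule cadjoint_bounded_clinear[OF b2])
  have bB3: "bounded_clinear B3" unfolding B3_def by (rule cadjoint_bounded_clinear[OF b3])
  have l1: "bounded_linear A1" and l2: "bounded_linear A2" and l3: "bounded_linear A3"
    using b1 b2 b3 unfolding bounded_clinear_def by simp_all
  have c12: "\<And>x. A1 (A2 x) = A2 (A1 x)" and c13: "\<And>x. A1 (A3 x) = A3 (A1 x)"
    and c23: "\<And>x. A2 (A3 x) = A3 (A2 x)"
    using c unfolding commuting_triple_def by (metis comp_apply)+
  note lin = bounded_clinear_add[OF b1] bounded_clinear_add[OF b2] bounded_clinear_add[OF b3]
    bounded_clinear_diff[OF b1] bounded_clinear_diff[OF b2] bounded_clinear_diff[OF b3]
    bounded_clinear_scaleC[OF b1] bounded_clinear_scaleC[OF b2] bounded_clinear_scaleC[OF b3]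
    bounded_clinear_zero[OF b1] bounded_clinear_zero[OF b2] bounded_clinear_zero[OF b3]
  note linB = bounded_clinear_add[OF bB1] bounded_clinear_add[OF bB2] bounded_clinear_add[OF bB3]
    bounded_clinear_diff[OF bB1] bounded_clinear_diff[OF bB2] bounded_clinear_diff[OF bB3]
    bounded_clinear_minus[OF bB1] bounded_clinear_minus[OF bB2] bounded_clinear_minus[OF bB3]
    bounded_clinear_zero[OF bB1] bounded_clinear_zero[OF bB2] bounded_clinear_zero[OF bB3]
  have e1: "\<And>x. A1 x = 0 \<Longrightarrow> A2 x = 0 \<Longrightarrow> A3 x = 0 \<Longrightarrow> x = 0"
    and e2: "\<And>x1 x2 x3. A1 x2 - A2 x1 = 0 \<Longrightarrow> A1 x3 - A3 x1 = 0 \<Longrightarrow> A2 x3 - A3 x2 = 0 \<Longrightarrow>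
        (\<exists>x. x1 = A1 x \<and> x2 = A2 x \<and> x3 = A3 x)"
    and e3: "\<And>y12 y13 y23. A1 y23 - A2 y13 + A3 y12 = 0 \<Longrightarrow>
        (\<exists>x1 x2 x3. y12 = A1 x2 - A2 x1 \<and> y13 = A1 x3 - A3 x1 \<and> y23 = A2 x3 - A3 x2)"
    and e4: "\<And>y. \<exists>y12 y13 y23. y = A1 y23 - A2 y13 + A3 y12"
    using ex unfolding koszul_exact_def by blast+
  define d1 :: "'a \<Rightarrow> 'a \<times> 'a \<times> 'a" where "d1 x = (A1 x, A2 x, A3 x)" for x
  define d1a :: "'a \<times> 'a \<times> 'a \<Rightarrow> 'a" where "d1a y = B1 (fst y) + B2 (fst (snd y)) + B3 (snd (snd y))" for y
  define d2 :: "'a \<times> 'a \<times> 'a \<Rightarrow> 'a \<times> 'a \<times> 'a" where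
    "d2 x = (A1 (fst (snd x)) - A2 (fst x), A1 (snd (snd x)) - A3 (fst x), A2 (snd (snd x)) - A3 (fst (snd x)))" for x
  define d2a :: "'a \<times> 'a \<times> 'a \<Rightarrow> 'a \<times> 'a \<times> 'a" where
    "d2a w = (- B2 (fst w) - B3 (fst (snd w)), B1 (fst w) - B3 (snd (snd w)), B1 (fst (snd w)) + B2 (snd (snd w)))" for w
  define d3 :: "'a \<times> 'a \<times> 'a \<Rightarrow> 'a" where "d3 y = A1 (snd (snd y)) - A2 (fst (snd y)) + A3 (fst y)" for y
  define d3a :: "'a \<Rightarrow> 'a \<times> 'a \<times> 'a" where "d3a y = (B3 y, - B2 y, B1 y)" for y
  have adj1: "\<And>x y. cinner (d1 x) y = cinner x (d1a y)"
    unfolding d1_def d1a_def by (simp add: cinner_prod_def p1 p2 p3 cinner_add_right)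
  have adj2: "\<And>x w. cinner (d2 x) w = cinner x (d2a w)"
    unfolding d2_def d2a_def
    by (simp add: cinner_prod_def p1 p2 p3 cinner_add_right cinner_diff_right cinner_diff_left
        cinner_minus_right algebra_simps)
  have adj3: "\<And>y x. cinner (d3 y) x = cinner y (d3a x)"
    unfolding d3_def d3a_def
    by (simp add: cinner_prod_def p1 p2 p3 cinner_add_left cinner_diff_left cinner_minus_right algebra_simps)
  have bl1: "bounded_linear d1" unfolding d1_def[abs_def]
    by (intro bounded_linear_Pair l1 l2 l3)
  have bl2: "bounded_linear d2" unfolding d2_def[abs_def]
    by (intro bounded_linear_Pair bounded_linear_sub bounded_linear_compose[OF l1] bounded_linear_compose[OF l2]
        bounded_linear_compose[OF l3] bounded_linear_fst bounded_linear_snd bounded_linear_compose[OF bounded_linear_fst]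
        bounded_linear_compose[OF bounded_linear_snd])
  have bl3: "bounded_linear d3" unfolding d3_def[abs_def]
    by (intro bounded_linear_add bounded_linear_sub bounded_linear_compose[OF l1] bounded_linear_compose[OF l2]
        bounded_linear_compose[OF l3] bounded_linear_fst bounded_linear_snd bounded_linear_compose[OF bounded_linear_fst]
        bounded_linear_compose[OF bounded_linear_snd])
  have bc1: "bounded_clinear d1" unfolding bounded_clinear_def using bl1 by (simp add: d1_def lin)
  have bc2: "bounded_clinear d2" unfolding bounded_clinear_def using bl2
    by (simp add: d2_def lin scaleC_prod_def scaleC_diff_right)
  have bc3: "bounded_clinear d3" unfolding bounded_clinear_def using bl3
    by (simp add: d3_def lin scaleC_prod_def scaleC_diff_right scaleC_add_right)
  have r1: "range d1 = {x. d2 x = 0}"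
  proof
    show "range d1 \<subseteq> {x. d2 x = 0}" by (auto simp: d1_def d2_def c12 c13 c23 zero_prod_def)
    show "{x. d2 x = 0} \<subseteq> range d1"
    proof
      fix x assume "x \<in> {x. d2 x = 0}"
      then have "A1 (fst (snd x)) - A2 (fst x) = 0" "A1 (snd (snd x)) - A3 (fst x) = 0"
        "A2 (snd (snd x)) - A3 (fst (snd x)) = 0" by (simp_all add: d2_def zero_prod_def)
      then obtain u where "fst x = A1 u" "fst (snd x) = A2 u" "snd (snd x) = A3 u" using e2 by blast
      then have "x = d1 u" by (simp add: d1_def prod_eq_iff)
      then show "x \<in> range d1" by blast
    qed
  qed
  have r2: "range d2 = {y. d3 y = 0}"
  proof
    show "range d2 \<subseteq> {y. d3 y = 0}" by (auto simp: d2_def d3_def lin c12 c13 c23 algebra_simps)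
    show "{y. d3 y = 0} \<subseteq> range d2"
    proof
      fix y assume "y \<in> {y. d3 y = 0}"
      then have "A1 (snd (snd y)) - A2 (fst (snd y)) + A3 (fst y) = 0" by (simp add: d3_def)
      then obtain x1 x2 x3 where "fst y = A1 x2 - A2 x1" "fst (snd y) = A1 x3 - A3 x1" "snd (snd y) = A2 x3 - A3 x2"
        using e3 by blast
      then have "y = d2 (x1, x2, x3)" by (simp add: d2_def prod_eq_iff)
      then show "y \<in> range d2" by blast
    qed
  qed
  have r3: "range d3 = UNIV"
  proof -
    have "y \<in> range d3" for y
    proof -
      obtain y12 y13 y23 where "y = A1 y23 - A2 y13 + A3 y12" using e4 by blast
      then have "y = d3 (y12, y13, y23)" by (simp add: d3_def)
      then show ?thesis by blast
    qed
    then show ?thesis by blast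
  qed
  have cl1: "closed (range d1)" unfolding r1 by (rule kernel_closed[OF bl2])
  have cl2: "closed (range d2)" unfolding r2 by (rule kernel_closed[OF bl3])
  have cl3: "closed (range d3)" unfolding r3 by simp
  show ?thesis unfolding koszul_exact_def B1_def[symmetric] B2_def[symmetric] B3_def[symmetric]
  proof (intro conjI allI impI)
    fix x assume h: "B1 x = 0 \<and> B2 x = 0 \<and> B3 x = 0"
    have "x \<in> range d3" using r3 by blast
    then obtain u where u: "x = d3 u" by blast
    have "cinner x x = cinner u (d3a x)" using adj3[of u x] u by simp
    also have "d3a x = 0" using h by (simp add: d3a_def zero_prod_def)
    finally have "cinner x x = 0" by simp
    then show "x = 0" by (simp add: cinner_eq_zero_iff)
  next
    fix x1 x2 x3 assume h: "B1 x2 - B2 x1 = 0 \<and> B1 x3 - B3 x1 = 0 \<and> B2 x3 - B3 x2 = 0"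
    define v where "v = (x3, - x2, x1)"
    have d2v: "d2a v = 0" using h by (simp add: d2a_def v_def linB algebra_simps zero_prod_def)
    have "\<exists>w. d3a w = v"
    proof (rule core[OF bc3 adj3 cl3])
      fix y assume "d3 y = 0"
      then have "y \<in> range d2" using r2 by blast
      then obtain u where u: "y = d2 u" by blast
      have "cinner v y = cnj (cinner u (d2a v))" using adj2[of u v] u by (subst cinner_commute) simp
      then show "cinner v y = 0" using d2v by simp
    qed
    then obtain w where "d3a w = v" by blast
    then have "B3 w = x3" "- B2 w = - x2" "B1 w = x1" by (simp_all add: d3a_def v_def)
    then show "\<exists>x. x1 = B1 x \<and> x2 = B2 x \<and> x3 = B3 x" by (intro exI[of _ w]) simp
  next
    fix y12 y13 y23 assume h: "B1 y23 - B2 y13 + B3 y12 = 0"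
    define v where "v = (y23, - y13, y12)"
    have d1v: "d1a v = 0" using h by (simp add: d1a_def v_def linB)
    have "\<exists>w. d2a w = v"
    proof (rule core[OF bc2 adj2 cl2])
      fix y assume "d2 y = 0"
      then have "y \<in> range d1" using r1 by blast
      then obtain u where u: "y = d1 u" by blast
      have "cinner v y = cnj (cinner u (d1a v))" using adj1[of u v] u by (subst cinner_commute) simp
      then show "cinner v y = 0" using d1v by simp
    qed
    then obtain w where w: "d2a w = v" by blast
    obtain w12 w13 w23 where wd: "w = (w12, w13, w23)" by (cases w) auto
    have eqs: "- B2 w12 - B3 w13 = y23" "B1 w12 - B3 w23 = - y13" "B1 w13 + B2 w23 = y12"
      using w by (simp_all add: d2a_def v_def wd)
    show "\<exists>x1 x2 x3. y12 = B1 x2 - B2 x1 \<and> y13 = B1 x3 - B3 x1 \<and> y23 = B2 x3 - B3 x2"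
    proof (intro exI conjI)
      show "y12 = B1 w13 - B2 (- w23)" using eqs(3) by (simp add: linB)
      show "y13 = B1 (- w12) - B3 (- w23)" using eqs(2) by (simp add: linB algebra_simps)
      show "y23 = B2 (- w12) - B3 w13" using eqs(1) by (simp add: linB)
    qed
  next
    fix y
    have "\<exists>w. d1a w = y"
    proof (rule core[OF bc1 adj1 cl1])
      fix u assume "d1 u = 0"
      then have "u = 0" using e1 by (simp add: d1_def zero_prod_def)
      then show "cinner y u = 0" by simp
    qed
    then obtain w where w: "d1a w = y" by blast
    show "\<exists>y12 y13 y23. y = B1 y23 - B2 y13 + B3 y12"
    proof (intro exI)
      show "y = B1 (fst w) - B2 (- fst (snd w)) + B3 (snd (snd w))"
        using w by (simp add: d1a_def linB)
    qed
  qed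
qed




lemma bP_cnj: "(a, s, p) \<in> bP \<Longrightarrow> (cnj a, cnj s, cnj p) \<in> bP"
proof -
  assume "(a, s, p) \<in> bP"
  then obtain z1 z2 where z: "s = z1 + z2" "p = z1 * z2" "cmod z1 = 1" "cmod z2 = 1"
    and n: "(cmod a)\<^sup>2 + 1/4 * (cmod s)\<^sup>2 = 1"
    unfolding bP_def bGamma_def by auto
  have "(cnj s, cnj p) \<in> bGamma" unfolding bGamma_def using z
    by (intro CollectI exI[of _ "cnj z1"] exI[of _ "cnj z2"]) simp
  then show ?thesis using n unfolding bP_def by simp
qed

lemma shift_bounded_clinear:
  assumes "bounded_clinear N" shows "bounded_clinear (\<lambda>x. N x - scaleC z x)"
proof -
  obtain K where K: "\<And>x. norm (N x) \<le> norm x * K" using bounded_clinear_bounded[OF assms] by blast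
  show ?thesis
  proof (rule bounded_clinear_intro[where K = "K + cmod z"])
    fix x y show "N (x + y) - scaleC z (x + y) = (N x - scaleC z x) + (N y - scaleC z y)"
      by (simp add: bounded_clinear_add[OF assms] scaleC_add_right algebra_simps)
  next
    fix c x show "N (scaleC c x) - scaleC z (scaleC c x) = scaleC c (N x - scaleC z x)"
      by (simp add: bounded_clinear_scaleC[OF assms] scaleC_diff_right scaleC_scaleC mult.commute)
  next
    fix x
    have "norm (N x - scaleC z x) \<le> norm (N x) + norm (scaleC z x)" by (rule norm_triangle_ineq4)
    also have "\<dots> \<le> norm x * K + cmod z * norm x" using K[of x] by simp
    finally show "norm (N x - scaleC z x) \<le> norm x * (K + cmod z)" by (simp add: algebra_simps)
  qed
qed

lemma shift_cadjoint:
  fixes N :: "'a::chilbert_space \<Rightarrow> 'a"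
  assumes "bounded_clinear N"
  shows "cadjoint (\<lambda>x. N x - scaleC z x) = (\<lambda>x. cadjoint N x - scaleC (cnj z) x)"
  by (rule cadjoint_eq)
     (simp add: cinner_diff_left cinner_diff_right cinner_scaleC_left cinner_scaleC_right cadjoint_prop[OF assms])

lemma shift_commuting:
  assumes "bounded_clinear A1" "bounded_clinear A2" "bounded_clinear A3" "commuting_triple A1 A2 A3"
  shows "commuting_triple (\<lambda>x. A1 x - scaleC z1 x) (\<lambda>x. A2 x - scaleC z2 x) (\<lambda>x. A3 x - scaleC z3 x)"
  using assms unfolding commuting_triple_def
  by (auto simp: fun_eq_iff bounded_clinear_diff bounded_clinear_scaleC scaleC_diff_right scaleC_scaleC
      mult.commute algebra_simps dest!: fun_cong)

lemma cadjoint_comp: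
  fixes S T :: "'a::chilbert_space \<Rightarrow> 'a"
  assumes "bounded_clinear S" "bounded_clinear T"
  shows "cadjoint (S \<circ> T) = cadjoint T \<circ> cadjoint S"
  by (rule cadjoint_eq) (simp add: cadjoint_prop[OF assms(1)] cadjoint_prop[OF assms(2)])

lemma P_unitary_cadjoint:
  fixes N1 N2 N3 :: "'a::chilbert_space \<Rightarrow> 'a"
  assumes "P_unitary N1 N2 N3"
  shows "P_unitary (cadjoint N1) (cadjoint N2) (cadjoint N3)"
proof -
  have b: "bounded_clinear N1" "bounded_clinear N2" "bounded_clinear N3"
    and c: "commuting_triple N1 N2 N3" and n: "normal_op N1" "normal_op N2" "normal_op N3"
    and sp: "taylor_spectrum N1 N2 N3 \<subseteq> bP"
    using assms unfolding P_unitary_def by auto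
  have c': "commuting_triple (cadjoint N1) (cadjoint N2) (cadjoint N3)"
    using c unfolding commuting_triple_def
    by (metis b cadjoint_comp)
  have n': "normal_op (cadjoint N1)" "normal_op (cadjoint N2)" "normal_op (cadjoint N3)"
    using n unfolding normal_op_def by (simp_all add: cadjoint_cadjoint b)
  have sp': "taylor_spectrum (cadjoint N1) (cadjoint N2) (cadjoint N3) \<subseteq> bP"
  proof
    fix t assume t: "t \<in> taylor_spectrum (cadjoint N1) (cadjoint N2) (cadjoint N3)"
    obtain z1 z2 z3 where tz: "t = (z1, z2, z3)" by (cases t) auto
    show "t \<in> bP"
    proof (rule ccontr)
      assume nb: "t \<notin> bP"
      have "(cnj z1, cnj z2, cnj z3) \<notin> bP"
        using bP_cnj[of "cnj z1" "cnj z2" "cnj z3"] nb tz by auto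
      then have "(cnj z1, cnj z2, cnj z3) \<notin> taylor_spectrum N1 N2 N3" using sp by blast
      then have ex: "koszul_exact (\<lambda>x. N1 x - scaleC (cnj z1) x) (\<lambda>x. N2 x - scaleC (cnj z2) x)
                                  (\<lambda>x. N3 x - scaleC (cnj z3) x)"
        unfolding taylor_spectrum_def by simp
      have "koszul_exact (cadjoint (\<lambda>x. N1 x - scaleC (cnj z1) x)) (cadjoint (\<lambda>x. N2 x - scaleC (cnj z2) x))
                         (cadjoint (\<lambda>x. N3 x - scaleC (cnj z3) x))"
        by (rule koszul_dual[OF shift_bounded_clinear[OF b(1)] shift_bounded_clinear[OF b(2)]
              shift_bounded_clinear[OF b(3)] shift_commuting[OF b c] ex])
      then have "koszul_exact (\<lambda>x. cadjoint N1 x - scaleC z1 x) (\<lambda>x. cadjoint N2 x - scaleC z2 x)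
                              (\<lambda>x. cadjoint N3 x - scaleC z3 x)"
        by (simp add: shift_cadjoint b)
      then show False using t tz unfolding taylor_spectrum_def by simp
    qed
  qed
  show ?thesis unfolding P_unitary_def
    using cadjoint_bounded_clinear[OF b(1)] cadjoint_bounded_clinear[OF b(2)]
      cadjoint_bounded_clinear[OF b(3)] c' n' sp' by simp
qed

lemma P_isometry_self:
  fixes N1 N2 N3 :: "'a::chilbert_space \<Rightarrow> 'a"
  assumes "P_unitary N1 N2 N3"
  shows "P_isometry_in TYPE('a) N1 N2 N3"
  unfolding P_isometry_in_def
proof (intro exI conjI allI)
  show "bounded_clinear (id :: 'a \<Rightarrow> 'a)"
    by (rule bounded_clinear_intro[where K = 1]) auto
qed (use assms in auto)


lemma iso_norm:
  assumes "\<And>x y. cinner (V x) (V y) = cinner x y"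
  shows "norm (V x) = norm x"
proof -
  have "Re (cinner (V x) (V x)) = Re (cinner x x)" using assms[of x x] by simp
  then have "(norm (V x))\<^sup>2 = (norm x)\<^sup>2" by (simp add: Re_cinner_self)
  then show ?thesis by (simp add: power2_eq_iff_nonneg)
qed

lemma iso_adj_left:
  fixes V :: "'a::chilbert_space \<Rightarrow> 'b::chilbert_space"
  assumes V: "bounded_clinear V" and iso: "\<And>x y. cinner (V x) (V y) = cinner x y"
  shows "cadjoint V (V y) = y"
  by (rule cinner_ext') (simp add: cadjoint_prop[OF V, symmetric] iso)

lemma adj_contr:
  fixes V :: "'a::chilbert_space \<Rightarrow> 'b::chilbert_space"
  assumes V: "bounded_clinear V" and iso: "\<And>x y. cinner (V x) (V y) = cinner x y"
  shows "norm (cadjoint V w) \<le> norm w"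
proof -
  let ?u = "cadjoint V w"
  have "(norm ?u)\<^sup>2 = Re (cinner ?u ?u)" by (simp add: Re_cinner_self)
  also have "\<dots> = Re (cinner (V ?u) w)" by (simp add: cadjoint_prop[OF V])
  also have "\<dots> \<le> cmod (cinner (V ?u) w)" by (rule complex_Re_le_cmod)
  also have "\<dots> \<le> norm (V ?u) * norm w" by (rule Cauchy_Schwarz)
  also have "\<dots> = norm ?u * norm w" using iso_norm[of V, OF iso] by simp
  finally have "(norm ?u)\<^sup>2 \<le> norm ?u * norm w" .
  then show ?thesis by (cases "norm ?u = 0") (auto simp: power2_eq_square)
qed

lemma normal_norm_eq:
  fixes U :: "'b::chilbert_space \<Rightarrow> 'b"
  assumes U: "bounded_clinear U" and n: "normal_op U"
  shows "norm (cadjoint U w) = norm (U w)"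
proof -
  have comm: "U (cadjoint U w) = cadjoint U (U w)" using n unfolding normal_op_def by (metis comp_apply)
  have "cinner (cadjoint U w) (cadjoint U w) = cinner (U (cadjoint U w)) w" by (simp add: cadjoint_prop[OF U])
  also have "\<dots> = cinner (cadjoint U (U w)) w" by (simp add: comm)
  also have "\<dots> = cinner (U w) (U w)" by (simp add: cadjoint_prop'[OF U])
  finally have "Re (cinner (cadjoint U w) (cadjoint U w)) = Re (cinner (U w) (U w))" by simp
  then have "(norm (cadjoint U w))\<^sup>2 = (norm (U w))\<^sup>2" by (simp add: Re_cinner_self)
  then show ?thesis by (simp add: power2_eq_iff_nonneg)
qed

lemma subnormal_hypo:
  fixes T :: "'a::chilbert_space \<Rightarrow> 'a" and V :: "'a \<Rightarrow> 'b::chilbert_space" and U :: "'b \<Rightarrow> 'b"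
  assumes T: "bounded_clinear T" and V: "bounded_clinear V" and U: "bounded_clinear U"
    and iso: "\<And>x y. cinner (V x) (V y) = cinner x y" and n: "normal_op U"
    and int: "\<And>x. U (V x) = V (T x)"
  shows "norm (cadjoint T x) \<le> norm (T x)"
proof -
  have eq: "cadjoint T = (\<lambda>y. cadjoint V (cadjoint U (V y)))"
  proof (rule cadjoint_eq)
    fix a b
    have "cinner (T a) b = cinner (V (T a)) (V b)" by (simp add: iso)
    also have "\<dots> = cinner (U (V a)) (V b)" by (simp add: int)
    also have "\<dots> = cinner (V a) (cadjoint U (V b))" by (simp add: cadjoint_prop[OF U])
    also have "\<dots> = cinner a (cadjoint V (cadjoint U (V b)))" by (simp add: cadjoint_prop[OF V])
    finally show "cinner (T a) b = cinner a (cadjoint V (cadjoint U (V b)))" .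
  qed
  have "norm (cadjoint T x) \<le> norm (cadjoint U (V x))" unfolding eq by (rule adj_contr[OF V iso])
  also have "\<dots> = norm (U (V x))" by (rule normal_norm_eq[OF U n])
  also have "\<dots> = norm (T x)" by (simp add: int iso_norm[of V, OF iso])
  finally show ?thesis .
qed

lemma normal_from_norms:
  fixes T :: "'a::chilbert_space \<Rightarrow> 'a"
  assumes T: "bounded_clinear T" and eq: "\<And>x. norm (cadjoint T x) = norm (T x)"
  shows "normal_op T"
proof -
  let ?S = "cadjoint T"
  have S: "bounded_clinear ?S" by (rule cadjoint_bounded_clinear[OF T])
  define D where "D = (\<lambda>x. T (?S x) - ?S (T x))"
  have Dadd: "D (x + y) = D x + D y" for x y
    unfolding D_def by (simp add: bounded_clinear_add[OF T] bounded_clinear_add[OF S] algebra_simps)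
  have Dsc: "D (scaleC c x) = scaleC c (D x)" for c x
    unfolding D_def by (simp add: bounded_clinear_scaleC[OF T] bounded_clinear_scaleC[OF S] scaleC_diff_right)
  have q: "cinner x (D x) = 0" for x
  proof -
    have "cinner x (T (?S x)) = cnj (cinner (?S x) (?S x))"
      by (subst cinner_commute) (simp add: cadjoint_prop[OF T])
    also have "\<dots> = complex_of_real ((norm (T x))\<^sup>2)" by (simp add: cinner_self eq)
    finally have 1: "cinner x (T (?S x)) = complex_of_real ((norm (T x))\<^sup>2)" .
    have 2: "cinner x (?S (T x)) = complex_of_real ((norm (T x))\<^sup>2)"
      by (simp add: cadjoint_prop[OF T, symmetric] cinner_self)
    show ?thesis unfolding D_def by (simp add: cinner_diff_right 1 2)
  qed
  have sym: "cinner x (D y) + cinner y (D x) = 0" for x y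
  proof -
    have "cinner (x + y) (D (x + y)) = 0" by (rule q)
    then have "cinner y (D x) + cinner x (D y) = 0" by (simp add: Dadd cinner_add_left cinner_add_right q)
    then show ?thesis by (simp add: add.commute)
  qed
  have asym: "cinner x (D y) - cinner y (D x) = 0" for x y
  proof -
    have "cinner x (D (scaleC \<i> y)) + cinner (scaleC \<i> y) (D x) = 0" by (rule sym)
    then have "\<i> * (cinner x (D y) - cinner y (D x)) = 0"
      by (simp add: Dsc cinner_scaleC_left cinner_scaleC_right algebra_simps)
    then show ?thesis by simp
  qed
  have "D y = 0" for y
  proof (rule cinner_eq_zero_all')
    fix x show "cinner x (D y) = 0" using sym[of x y] asym[of x y] by simp
  qed
  then show ?thesis unfolding normal_op_def D_def by (auto simp: fun_eq_iff)
qed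

lemma reduce_adj:
  fixes T :: "'a::chilbert_space \<Rightarrow> 'a" and V :: "'a \<Rightarrow> 'b::chilbert_space" and U :: "'b \<Rightarrow> 'b"
  assumes T: "bounded_clinear T" and V: "bounded_clinear V" and U: "bounded_clinear U"
    and iso: "\<And>x y. cinner (V x) (V y) = cinner x y" and n: "normal_op U"
    and int: "\<And>x. U (V x) = V (T x)" and tn: "\<And>x. norm (cadjoint T x) = norm (T x)"
  shows "cadjoint V (U w) = T (cadjoint V w)"
proof -
  have key: "cadjoint U (V x) = V (cadjoint T x)" for x
  proof -
    let ?a = "cadjoint U (V x)" and ?b = "V (cadjoint T x)"
    have na: "norm ?a = norm (T x)"
      using normal_norm_eq[OF U n, of "V x"] by (simp add: int iso_norm[of V, OF iso])
    have nb: "norm ?b = norm (T x)" by (simp add: iso_norm[of V, OF iso] tn)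
    have "cinner ?a ?b = cinner (V x) (U (V (cadjoint T x)))" by (simp add: cadjoint_prop'[OF U])
    also have "\<dots> = cinner x (T (cadjoint T x))" by (simp add: int iso)
    also have "\<dots> = cnj (cinner (cadjoint T x) (cadjoint T x))"
      by (subst cinner_commute) (simp add: cadjoint_prop[OF T])
    also have "\<dots> = complex_of_real ((norm (T x))\<^sup>2)" by (simp add: cinner_self tn)
    finally have ab: "Re (cinner ?a ?b) = (norm (T x))\<^sup>2" by simp
    have "(norm (?a - ?b))\<^sup>2 = 0" by (simp add: norm_diff_sq na nb ab)
    then show ?thesis by simp
  qed
  show ?thesis
  proof (rule cinner_ext)
    fix x
    have "cinner (cadjoint V (U w)) x = cinner (U w) (V x)" by (simp add: cadjoint_prop'[OF V])
    also have "\<dots> = cinner w (cadjoint U (V x))" by (simp add: cadjoint_prop[OF U])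
    also have "\<dots> = cinner w (V (cadjoint T x))" by (simp add: key)
    also have "\<dots> = cinner (cadjoint V w) (cadjoint T x)" by (simp add: cadjoint_prop'[OF V])
    also have "\<dots> = cinner (T (cadjoint V w)) x" by (simp add: cadjoint_prop[OF T])
    finally show "cinner (cadjoint V (U w)) x = cinner (T (cadjoint V w)) x" .
  qed
qed

lemma koszul_transfer:
  fixes A1 A2 A3 :: "'b::chilbert_space \<Rightarrow> 'b" and B1 B2 B3 :: "'a::chilbert_space \<Rightarrow> 'a"
    and V :: "'a \<Rightarrow> 'b" and W :: "'b \<Rightarrow> 'a"
  assumes V: "bounded_clinear V" and W: "bounded_clinear W" and WV: "\<And>x. W (V x) = x"
    and i1: "\<And>x. A1 (V x) = V (B1 x)" and i2: "\<And>x. A2 (V x) = V (B2 x)" and i3: "\<And>x. A3 (V x) = V (B3 x)"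
    and j1: "\<And>w. W (A1 w) = B1 (W w)" and j2: "\<And>w. W (A2 w) = B2 (W w)" and j3: "\<And>w. W (A3 w) = B3 (W w)"
    and ex: "koszul_exact A1 A2 A3"
  shows "koszul_exact B1 B2 B3"
proof -
  note Vd = bounded_clinear_diff[OF V] bounded_clinear_add[OF V] bounded_clinear_zero[OF V]
  note Wd = bounded_clinear_diff[OF W] bounded_clinear_add[OF W] bounded_clinear_zero[OF W]
  have e1: "\<And>x. A1 x = 0 \<and> A2 x = 0 \<and> A3 x = 0 \<longrightarrow> x = 0"
    and e2: "\<And>x1 x2 x3. A1 x2 - A2 x1 = 0 \<and> A1 x3 - A3 x1 = 0 \<and> A2 x3 - A3 x2 = 0 \<longrightarrow>
        (\<exists>x. x1 = A1 x \<and> x2 = A2 x \<and> x3 = A3 x)"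
    and e3: "\<And>y12 y13 y23. A1 y23 - A2 y13 + A3 y12 = 0 \<longrightarrow>
        (\<exists>x1 x2 x3. y12 = A1 x2 - A2 x1 \<and> y13 = A1 x3 - A3 x1 \<and> y23 = A2 x3 - A3 x2)"
    and e4: "\<And>y. \<exists>y12 y13 y23. y = A1 y23 - A2 y13 + A3 y12"
    using ex unfolding koszul_exact_def by blast+
  show ?thesis unfolding koszul_exact_def
  proof (intro conjI allI impI)
    fix x assume "B1 x = 0 \<and> B2 x = 0 \<and> B3 x = 0"
    then have "A1 (V x) = 0 \<and> A2 (V x) = 0 \<and> A3 (V x) = 0" by (simp add: i1 i2 i3 Vd)
    then have "V x = 0" using e1 by blast
    then show "x = 0" using WV[of x] by (simp add: Wd)
  next
    fix x1 x2 x3 assume "B1 x2 - B2 x1 = 0 \<and> B1 x3 - B3 x1 = 0 \<and> B2 x3 - B3 x2 = 0"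
    moreover have "A1 (V x2) - A2 (V x1) = V (B1 x2 - B2 x1)" "A1 (V x3) - A3 (V x1) = V (B1 x3 - B3 x1)"
      "A2 (V x3) - A3 (V x2) = V (B2 x3 - B3 x2)" by (simp_all add: i1 i2 i3 Vd(1))
    ultimately have "A1 (V x2) - A2 (V x1) = 0 \<and> A1 (V x3) - A3 (V x1) = 0 \<and> A2 (V x3) - A3 (V x2) = 0"
      by (simp add: Vd(3))
    then obtain w where w: "V x1 = A1 w" "V x2 = A2 w" "V x3 = A3 w" using e2 by blast
    show "\<exists>x. x1 = B1 x \<and> x2 = B2 x \<and> x3 = B3 x"
      by (rule exI[of _ "W w"]) (simp add: j1[symmetric] j2[symmetric] j3[symmetric] w[symmetric] WV)
  next
    fix y12 y13 y23 assume "B1 y23 - B2 y13 + B3 y12 = 0"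
    moreover have "A1 (V y23) - A2 (V y13) + A3 (V y12) = V (B1 y23 - B2 y13 + B3 y12)"
      by (simp add: i1 i2 i3 Vd(1,2))
    ultimately have "A1 (V y23) - A2 (V y13) + A3 (V y12) = 0"
      by (simp add: Vd(3))
    then obtain x1 x2 x3 where x: "V y12 = A1 x2 - A2 x1" "V y13 = A1 x3 - A3 x1" "V y23 = A2 x3 - A3 x2"
      using e3 by blast
    show "\<exists>x1 x2 x3. y12 = B1 x2 - B2 x1 \<and> y13 = B1 x3 - B3 x1 \<and> y23 = B2 x3 - B3 x2"
    proof (intro exI conjI)
      have "y12 = W (V y12)" by (simp add: WV)
      then show "y12 = B1 (W x2) - B2 (W x1)" by (simp add: x Wd(1) j1 j2)
      have "y13 = W (V y13)" by (simp add: WV)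
      then show "y13 = B1 (W x3) - B3 (W x1)" by (simp add: x Wd(1) j1 j3)
      have "y23 = W (V y23)" by (simp add: WV)
      then show "y23 = B2 (W x3) - B3 (W x2)" by (simp add: x Wd(1) j2 j3)
    qed
  next
    fix y
    obtain y12 y13 y23 where y: "V y = A1 y23 - A2 y13 + A3 y12" using e4 by blast
    show "\<exists>y12 y13 y23. y = B1 y23 - B2 y13 + B3 y12"
    proof (intro exI)
      have "y = W (V y)" by (simp add: WV)
      also have "\<dots> = B1 (W y23) - B2 (W y13) + B3 (W y12)" by (simp add: y Wd j1 j2 j3)
      finally show "y = B1 (W y23) - B2 (W y13) + B3 (W y12)" .
    qed
  qed
qed


lemma shift_intertwine:
  assumes V: "bounded_clinear V" and int: "\<And>x. U (V x) = V (T x)"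
  shows "(\<lambda>w. U w - scaleC z w) (V x) = V ((\<lambda>x. T x - scaleC z x) x)"
  by (simp add: int bounded_clinear_diff[OF V] bounded_clinear_scaleC[OF V])

theorem mainTheorem16:
  fixes N1 N2 N3 :: "'a::chilbert_space \<Rightarrow> 'a"
  assumes "bounded_clinear N1" and "bounded_clinear N2" and "bounded_clinear N3"
    and "commuting_triple N1 N2 N3"
  shows "(P_unitary N1 N2 N3 \<longrightarrow>
            P_isometry_in TYPE('a) N1 N2 N3 \<and>
            P_isometry_in TYPE('a) (cadjoint N1) (cadjoint N2) (cadjoint N3)) \<and>
         (P_isometry_in TYPE('b::chilbert_space) N1 N2 N3 \<and>
          P_isometry_in TYPE('c::chilbert_space) (cadjoint N1) (cadjoint N2) (cadjoint N3) \<longrightarrow>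
            P_unitary N1 N2 N3)"
proof (intro conjI impI)
  assume "P_unitary N1 N2 N3"
  then show "P_isometry_in TYPE('a) N1 N2 N3" "P_isometry_in TYPE('a) (cadjoint N1) (cadjoint N2) (cadjoint N3)"
    using P_isometry_self P_unitary_cadjoint by blast+
next
  assume "P_isometry_in TYPE('b::chilbert_space) N1 N2 N3 \<and>
          P_isometry_in TYPE('c::chilbert_space) (cadjoint N1) (cadjoint N2) (cadjoint N3)"
  then obtain V :: "'a \<Rightarrow> 'b" and U1 U2 U3 and V' :: "'a \<Rightarrow> 'c" and U1' U2' U3'
    where V: "bounded_clinear V" and iso: "\<And>x y. cinner (V x) (V y) = cinner x y"
      and PU: "P_unitary U1 U2 U3"
      and i1: "\<And>x. U1 (V x) = V (N1 x)" and i2: "\<And>x. U2 (V x) = V (N2 x)" and i3: "\<And>x. U3 (V x) = V (N3 x)"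
      and V': "bounded_clinear V'" and iso': "\<And>x y. cinner (V' x) (V' y) = cinner x y"
      and PU': "P_unitary U1' U2' U3'"
      and i1': "\<And>x. U1' (V' x) = V' (cadjoint N1 x)" and i2': "\<And>x. U2' (V' x) = V' (cadjoint N2 x)"
      and i3': "\<And>x. U3' (V' x) = V' (cadjoint N3 x)"
    unfolding P_isometry_in_def by blast
  note b = assms(1-3)
  have Ub: "bounded_clinear U1" "bounded_clinear U2" "bounded_clinear U3"
    and Un: "normal_op U1" "normal_op U2" "normal_op U3"
    and Usp: "taylor_spectrum U1 U2 U3 \<subseteq> bP"
    using PU unfolding P_unitary_def by auto
  have Ub': "bounded_clinear U1'" "bounded_clinear U2'" "bounded_clinear U3'"
    and Un': "normal_op U1'" "normal_op U2'" "normal_op U3'"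
    using PU' unfolding P_unitary_def by auto
  have eqn: "norm (cadjoint T x) = norm (T x)"
    if T: "bounded_clinear T" and U: "bounded_clinear U" "normal_op U" and int: "\<And>x. U (V x) = V (T x)"
      and U': "bounded_clinear U'" "normal_op U'" and int': "\<And>x. U' (V' x) = V' (cadjoint T x)"
    for T :: "'a \<Rightarrow> 'a" and U :: "'b \<Rightarrow> 'b" and U' :: "'c \<Rightarrow> 'c" and x
  proof -
    have 1: "norm (cadjoint T x) \<le> norm (T x)" by (rule subnormal_hypo[OF T V U(1) iso U(2) int])
    have "norm (cadjoint (cadjoint T) x) \<le> norm (cadjoint T x)"
      by (rule subnormal_hypo[OF cadjoint_bounded_clinear[OF T] V' U'(1) iso' U'(2) int'])
    then have 2: "norm (T x) \<le> norm (cadjoint T x)" by (simp add: cadjoint_cadjoint[OF T])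
    from 1 2 show ?thesis by simp
  qed
  have e1: "\<And>x. norm (cadjoint N1 x) = norm (N1 x)" by (rule eqn[OF b(1) Ub(1) Un(1) i1 Ub'(1) Un'(1) i1'])
  have e2: "\<And>x. norm (cadjoint N2 x) = norm (N2 x)" by (rule eqn[OF b(2) Ub(2) Un(2) i2 Ub'(2) Un'(2) i2'])
  have e3: "\<And>x. norm (cadjoint N3 x) = norm (N3 x)" by (rule eqn[OF b(3) Ub(3) Un(3) i3 Ub'(3) Un'(3) i3'])
  have n: "normal_op N1" "normal_op N2" "normal_op N3"
    using normal_from_norms[OF b(1) e1] normal_from_norms[OF b(2) e2] normal_from_norms[OF b(3) e3] by auto
  let ?W = "cadjoint V"
  have W: "bounded_clinear ?W" by (rule cadjoint_bounded_clinear[OF V])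
  have WV: "\<And>x. ?W (V x) = x" by (rule iso_adj_left[OF V iso])
  have j1: "\<And>w. ?W (U1 w) = N1 (?W w)" by (rule reduce_adj[OF b(1) V Ub(1) iso Un(1) i1 e1])
  have j2: "\<And>w. ?W (U2 w) = N2 (?W w)" by (rule reduce_adj[OF b(2) V Ub(2) iso Un(2) i2 e2])
  have j3: "\<And>w. ?W (U3 w) = N3 (?W w)" by (rule reduce_adj[OF b(3) V Ub(3) iso Un(3) i3 e3])
  have sp: "taylor_spectrum N1 N2 N3 \<subseteq> bP"
  proof
    fix t assume t: "t \<in> taylor_spectrum N1 N2 N3"
    obtain z1 z2 z3 where tz: "t = (z1, z2, z3)" by (cases t) auto
    show "t \<in> bP"
    proof (rule ccontr)
      assume "t \<notin> bP"
      then have "t \<notin> taylor_spectrum U1 U2 U3" using Usp by blast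
      then have ex: "koszul_exact (\<lambda>w. U1 w - scaleC z1 w) (\<lambda>w. U2 w - scaleC z2 w) (\<lambda>w. U3 w - scaleC z3 w)"
        using tz unfolding taylor_spectrum_def by simp
      have "koszul_exact (\<lambda>x. N1 x - scaleC z1 x) (\<lambda>x. N2 x - scaleC z2 x) (\<lambda>x. N3 x - scaleC z3 x)"
      proof (rule koszul_transfer[OF V W WV _ _ _ _ _ _ ex])
        show "\<And>x. U1 (V x) - scaleC z1 (V x) = V (N1 x - scaleC z1 x)"
          by (simp add: i1 bounded_clinear_diff[OF V] bounded_clinear_scaleC[OF V])
        show "\<And>x. U2 (V x) - scaleC z2 (V x) = V (N2 x - scaleC z2 x)"
          by (simp add: i2 bounded_clinear_diff[OF V] bounded_clinear_scaleC[OF V])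
        show "\<And>x. U3 (V x) - scaleC z3 (V x) = V (N3 x - scaleC z3 x)"
          by (simp add: i3 bounded_clinear_diff[OF V] bounded_clinear_scaleC[OF V])
        show "\<And>w. ?W (U1 w - scaleC z1 w) = N1 (?W w) - scaleC z1 (?W w)"
          by (simp add: j1 bounded_clinear_diff[OF W] bounded_clinear_scaleC[OF W])
        show "\<And>w. ?W (U2 w - scaleC z2 w) = N2 (?W w) - scaleC z2 (?W w)"
          by (simp add: j2 bounded_clinear_diff[OF W] bounded_clinear_scaleC[OF W])
        show "\<And>w. ?W (U3 w - scaleC z3 w) = N3 (?W w) - scaleC z3 (?W w)"
          by (simp add: j3 bounded_clinear_diff[OF W] bounded_clinear_scaleC[OF W])
      qed
      then show False using t tz unfolding taylor_spectrum_def by simp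
    qed
  qed
  show "P_unitary N1 N2 N3" unfolding P_unitary_def using b assms(4) n sp by simp
qed


end
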